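(* Let $\mathcal{G}$ be an $A$-compatible P-graph with associated map $\mu$ satisfying condition ( * ): for every $\ell'\in\{1,\dots,m\}$ and $i\in\{1,\dots,d\}$, every directed path from $j_i$ to $\ell'$ that contains an edge in $\mathcal{E}^-$ goes through $m+1$. Let $k\in\{1,\dots,d+1\}$, $\widetilde B\in\mathcal{B}^k$, $\ell\in\{1,\dots,m+1\}\setminus\widetilde B$, $B=\widetilde B\cup\{\ell\}$. Then for every $\zeta\in\Lambda_\mathcal{G}(F,B)$, \[\psi_F^{-1}(\zeta)=\Big\{E\cup(\zeta\cap\mathcal{E}^+) \;:\; E\in\underset{e\in\zeta\cap\mathcal{E}^-}{\odot}\big(\{e\}\cup\mu(e)\big)\Big\}.\]
   Context: $R$ is a partially ordered commutative ring. Let $d\ge0$, $m_0,\dots,m_d\ge0$ with $m=m_0+\cdots+m_d$. $A\in R^{m\times m}$, $b\in R^m$: for $i=1,\dots,d$ the rows indexed by $\mathcal{N}_i=\{1+\sum_{j<i}m_j,\dots,\sum_{j\le i}m_j\}$ are zero outside the columns indexed by $\mathcal{N}_i$, where they form a square $A_i$, and the corresponding subvector $b^i$ has at most one nonzero entry; the last $m_0$ rows form an arbitrary $A_0\in R^{m_0\times m}$ with arbitrary $b^0$. $\mathcal{N}=\{1,\dots,m+1\}$, $\mathcal{N}_0=\{m-m_0+1,\dots,m+1\}$, $\mathcal{N}_{d+1}=\{m+1\}$. Fixed $j_i\in\mathcal{N}_i$ with $b_j=0$ for all $j\le m-m_0$, $j\notin\{j_1,\dots,j_d\}$; $F=\{j_1,\dots,j_d,m+1\}$.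 For pairwise disjoint finite sets, $S_1\odot\cdots\odot S_k=\{\{w_1,\dots,w_k\}:w_j\in S_j\}$; $\mathcal{B}^k=\odot_{j\in\{1,\dots,d+1\}\setminus\{k\}}\mathcal{N}_j$. A multidigraph $\mathcal{G}=(\mathcal{N},\mathcal{E})$ has source/target maps $s,t$, no self-loops, labeling $\pi\colon\mathcal{E}\to R$, Laplacian $L_{ij}=\sum_{e:s(e)=j,t(e)=i}\pi(e)$ ($i\ne j$), $L_{ii}=-\sum_{k\ne i}L_{ki}$. $\mathcal{G}$ is $A$-compatible if (i) no edge goes from a node in $\mathcal{N}_i$ ($i\ge0$) to a node in $\mathcal{N}_j$ with $i\ne j$, $j\ge1$; (ii) for $\ell\notin F$ the $\ell$-th row of $L$ equals the $\ell$-th row of $(A\,|\,b)$. Trees/forests: subgraphs with acyclic underlying undirected graph (connected for trees), rooted at $N$ if $N$ is the only node without outgoing edges; spanning means node set $\mathcal{N}$; forests are identified with edge sets. $\Theta_\mathcal{G}(F,B)$ ($|F|=|B|$): spanning forests with $|B|$ components, each containing a node of $F$ and being a tree rooted at a node of $B$. A cycle is a closed directed path with no repeated nodes. $\mathcal{E}^-=\{e:\pi(e)\in R_{<0}\}$, $\mathcal{E}^+=\{e:\pi(e)\in R_{>0}\}$. $\mathcal{G}$ is a P-graph with associated map $\mu\colon\mathcal{E}^-\to\mathcal{P}(\mathcal{E}^+)$ if (i) $\mathcal{E}=\mathcal{E}^+\sqcup\mathcal{E}^-$; (ii) every cycle contains at most one edge of $\mathcal{E}^-$; (iii) for $e\in\mathcal{E}^-$: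 (a) $e'\in\mu(e)\Rightarrow s(e')=s(e)$; (b) $e'\in\mu(e)\Rightarrow$ every cycle containing $e'$ contains $t(e)$; (c) $\mu(e)\cap\mu(e')=\emptyset$ for $e\ne e'$; (iv) $\pi(e)+\sum_{e'\in\mu(e)}\pi(e')\in R_{\ge0}$ for all $e\in\mathcal{E}^-$. $\operatorname{im}\mu=\bigcup_e\mu(e)$, $\mu^*\colon\operatorname{im}\mu\to\mathcal{E}^-$, $\mu^*(e')=e$ if $e'\in\mu(e)$. For $\zeta\in\Theta_\mathcal{G}(F,B)$, $\mathcal{E}^F_\zeta=\{E\subseteq\zeta\cap\operatorname{im}\mu:(\zeta\setminus E)\cup\mu^*(E)\in\Theta_\mathcal{G}(F,B)\}$; this family is closed under union and $E^F_\zeta$ denotes its maximum (union of its members). $\Lambda_\mathcal{G}(F,B)=\{\zeta\in\Theta_\mathcal{G}(F,B):\mathcal{E}^F_\zeta=\{\emptyset\}\}$, and $\psi_F\colon\Theta_\mathcal{G}(F,B)\to\Lambda_\mathcal{G}(F,B)$, $\psi_F(\zeta)=(\zeta\setminus E^F_\zeta)\cup\mu^*(E^F_\zeta)$. *)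

theory Defs
  imports Main
begin

definition mtot :: "(nat \<Rightarrow> nat) \<Rightarrow> nat \<Rightarrow> nat" where
  "mtot ms d = (\<Sum>j\<le>d. ms j)"

definition Nblk :: "(nat \<Rightarrow> nat) \<Rightarrow> nat \<Rightarrow> nat \<Rightarrow> nat set" where
  "Nblk ms d i =
     (if i = 0 then {mtot ms d - ms 0 + 1 .. mtot ms d + 1}
      else if i \<le> d then {1 + (\<Sum>j\<in>{1..<i}. ms j) .. (\<Sum>j\<in>{1..i}. ms j)}
      else if i = d + 1 then {mtot ms d + 1}
      else {})"

definition odot :: "'i set \<Rightarrow> ('i \<Rightarrow> 'a set) \<Rightarrow> 'a set set" where
  "odot I S = {f ` I | f. \<forall>i\<in>I. f i \<in> S i}"

definition lap :: "'e set \<Rightarrow> ('e \<Rightarrow> nat) \<Rightarrow> ('e \<Rightarrow> nat) \<Rightarrow> ('e \<Rightarrow> 'r::comm_ring)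
                    \<Rightarrow> nat set \<Rightarrow> nat \<Rightarrow> nat \<Rightarrow> 'r" where
  "lap E s t \<pi> N i j =
     (if i \<noteq> j then (\<Sum>e\<in>{e\<in>E. s e = j \<and> t e = i}. \<pi> e)
      else - (\<Sum>k\<in>N - {i}. (\<Sum>e\<in>{e\<in>E. s e = i \<and> t e = k}. \<pi> e)))"

definition ucycle :: "('e \<Rightarrow> nat) \<Rightarrow> ('e \<Rightarrow> nat) \<Rightarrow> 'e set \<Rightarrow> 'e list \<Rightarrow> nat list \<Rightarrow> bool" where
  "ucycle s t Z es vs \<longleftrightarrow>
     es \<noteq> [] \<and> length vs = length es + 1 \<and> distinct es \<and> set es \<subseteq> Z \<and>
     hd vs = last vs \<and> distinct (tl vs) \<and>
     (\<forall>i<length es. {s (es ! i), t (es ! i)} = {vs ! i, vs ! Suc i})"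

definition forest :: "('e \<Rightarrow> nat) \<Rightarrow> ('e \<Rightarrow> nat) \<Rightarrow> 'e set \<Rightarrow> bool" where
  "forest s t Z \<longleftrightarrow> \<not> (\<exists>es vs. ucycle s t Z es vs)"

definition uedges :: "('e \<Rightarrow> nat) \<Rightarrow> ('e \<Rightarrow> nat) \<Rightarrow> 'e set \<Rightarrow> (nat \<times> nat) set" where
  "uedges s t Z = {(s e, t e) | e. e \<in> Z} \<union> {(t e, s e) | e. e \<in> Z}"

definition ucomp :: "('e \<Rightarrow> nat) \<Rightarrow> ('e \<Rightarrow> nat) \<Rightarrow> 'e set \<Rightarrow> nat set \<Rightarrow> nat \<Rightarrow> nat set" where
  "ucomp s t Z N x = {y \<in> N. (x, y) \<in> (uedges s t Z)\<^sup>*}"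

definition comps :: "('e \<Rightarrow> nat) \<Rightarrow> ('e \<Rightarrow> nat) \<Rightarrow> 'e set \<Rightarrow> nat set \<Rightarrow> nat set set" where
  "comps s t Z N = ucomp s t Z N ` N"

(* Theta_G(F,B): spanning forests (edge sets) with |B| components, each containing a node of F
   and being a tree rooted at a node of B (the root is the only node of the component
   without outgoing edges) *)
definition Theta :: "'e set \<Rightarrow> ('e \<Rightarrow> nat) \<Rightarrow> ('e \<Rightarrow> nat) \<Rightarrow> nat set \<Rightarrow> nat set \<Rightarrow> nat set \<Rightarrow> 'e set set" where
  "Theta E s t N F B =
     {Z. Z \<subseteq> E \<and> forest s t Z \<and> card (comps s t Z N) = card B \<and>
         (\<forall>C\<in>comps s t Z N. C \<inter> F \<noteq> {} \<and>
            (\<exists>r\<in>B \<inter> C. \<forall>v\<in>C. (\<not> (\<exists>e\<in>Z. s e = v)) \<longleftrightarrow> v = r))}"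

definition dcycle :: "('e \<Rightarrow> nat) \<Rightarrow> ('e \<Rightarrow> nat) \<Rightarrow> 'e list \<Rightarrow> bool" where
  "dcycle s t es \<longleftrightarrow> es \<noteq> [] \<and>
     (\<forall>i. Suc i < length es \<longrightarrow> t (es ! i) = s (es ! Suc i)) \<and>
     t (last es) = s (hd es) \<and> distinct (map s es)"

definition dpath :: "('e \<Rightarrow> nat) \<Rightarrow> ('e \<Rightarrow> nat) \<Rightarrow> 'e list \<Rightarrow> nat \<Rightarrow> nat \<Rightarrow> bool" where
  "dpath s t es u v \<longleftrightarrow> es \<noteq> [] \<and>
     (\<forall>i. Suc i < length es \<longrightarrow> t (es ! i) = s (es ! Suc i)) \<and>
     s (hd es) = u \<and> t (last es) = v \<and> distinct (u # map t es)"

definition pathnodes :: "('e \<Rightarrow> nat) \<Rightarrow> ('e \<Rightarrow> nat) \<Rightarrow> 'e list \<Rightarrow> nat set" where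
  "pathnodes s t es = set (map s es) \<union> set (map t es)"

definition Eneg :: "'e set \<Rightarrow> ('e \<Rightarrow> 'r::ordered_comm_ring) \<Rightarrow> 'e set" where
  "Eneg E \<pi> = {e \<in> E. \<pi> e < 0}"

definition Epos :: "'e set \<Rightarrow> ('e \<Rightarrow> 'r::ordered_comm_ring) \<Rightarrow> 'e set" where
  "Epos E \<pi> = {e \<in> E. \<pi> e > 0}"

definition Pgraph :: "'e set \<Rightarrow> ('e \<Rightarrow> nat) \<Rightarrow> ('e \<Rightarrow> nat) \<Rightarrow> ('e \<Rightarrow> 'r::ordered_comm_ring)
                       \<Rightarrow> ('e \<Rightarrow> 'e set) \<Rightarrow> bool" where
  "Pgraph E s t \<pi> \<mu> \<longleftrightarrow>
     E = Epos E \<pi> \<union> Eneg E \<pi> \<and>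
     (\<forall>es. dcycle s t es \<and> set es \<subseteq> E \<longrightarrow> card (set es \<inter> Eneg E \<pi>) \<le> 1) \<and>
     (\<forall>e\<in>Eneg E \<pi>. \<mu> e \<subseteq> Epos E \<pi> \<and>
        (\<forall>e'\<in>\<mu> e. s e' = s e) \<and>
        (\<forall>e'\<in>\<mu> e. \<forall>es. dcycle s t es \<and> set es \<subseteq> E \<and> e' \<in> set es
                      \<longrightarrow> t e \<in> set (map s es)) \<and>
        (\<forall>e2\<in>Eneg E \<pi>. e \<noteq> e2 \<longrightarrow> \<mu> e \<inter> \<mu> e2 = {}) \<and>
        \<pi> e + (\<Sum>e'\<in>\<mu> e. \<pi> e') \<ge> 0)"

definition immu :: "'e set \<Rightarrow> ('e \<Rightarrow> 'r::ordered_comm_ring) \<Rightarrow> ('e \<Rightarrow> 'e set) \<Rightarrow> 'e set" where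
  "immu E \<pi> \<mu> = (\<Union>e\<in>Eneg E \<pi>. \<mu> e)"

definition mustar :: "'e set \<Rightarrow> ('e \<Rightarrow> 'r::ordered_comm_ring) \<Rightarrow> ('e \<Rightarrow> 'e set) \<Rightarrow> 'e \<Rightarrow> 'e" where
  "mustar E \<pi> \<mu> e' = (THE e. e \<in> Eneg E \<pi> \<and> e' \<in> \<mu> e)"

definition EFfam :: "'e set \<Rightarrow> ('e \<Rightarrow> nat) \<Rightarrow> ('e \<Rightarrow> nat) \<Rightarrow> ('e \<Rightarrow> 'r::ordered_comm_ring)
                      \<Rightarrow> ('e \<Rightarrow> 'e set) \<Rightarrow> nat set \<Rightarrow> nat set \<Rightarrow> nat set \<Rightarrow> 'e set \<Rightarrow> 'e set set" where
  "EFfam E s t \<pi> \<mu> N F B Z =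
     {X. X \<subseteq> Z \<inter> immu E \<pi> \<mu> \<and> (Z - X) \<union> mustar E \<pi> \<mu> ` X \<in> Theta E s t N F B}"

definition EFmax :: "'e set \<Rightarrow> ('e \<Rightarrow> nat) \<Rightarrow> ('e \<Rightarrow> nat) \<Rightarrow> ('e \<Rightarrow> 'r::ordered_comm_ring)
                      \<Rightarrow> ('e \<Rightarrow> 'e set) \<Rightarrow> nat set \<Rightarrow> nat set \<Rightarrow> nat set \<Rightarrow> 'e set \<Rightarrow> 'e set" where
  "EFmax E s t \<pi> \<mu> N F B Z = \<Union> (EFfam E s t \<pi> \<mu> N F B Z)"

definition Lambda :: "'e set \<Rightarrow> ('e \<Rightarrow> nat) \<Rightarrow> ('e \<Rightarrow> nat) \<Rightarrow> ('e \<Rightarrow> 'r::ordered_comm_ring)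
                       \<Rightarrow> ('e \<Rightarrow> 'e set) \<Rightarrow> nat set \<Rightarrow> nat set \<Rightarrow> nat set \<Rightarrow> 'e set set" where
  "Lambda E s t \<pi> \<mu> N F B = {Z \<in> Theta E s t N F B. EFfam E s t \<pi> \<mu> N F B Z = {{}}}"

definition psiF :: "'e set \<Rightarrow> ('e \<Rightarrow> nat) \<Rightarrow> ('e \<Rightarrow> nat) \<Rightarrow> ('e \<Rightarrow> 'r::ordered_comm_ring)
                     \<Rightarrow> ('e \<Rightarrow> 'e set) \<Rightarrow> nat set \<Rightarrow> nat set \<Rightarrow> nat set \<Rightarrow> 'e set \<Rightarrow> 'e set" where
  "psiF E s t \<pi> \<mu> N F B Z =
     (Z - EFmax E s t \<pi> \<mu> N F B Z) \<union> mustar E \<pi> \<mu> ` EFmax E s t \<pi> \<mu> N F B Z"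

end

theory Submission
  imports Defs
begin



definition chain :: "('a \<times> 'a) set \<Rightarrow> 'a list \<Rightarrow> bool" where
  "chain R xs \<longleftrightarrow> (\<forall>i. Suc i < length xs \<longrightarrow> (xs!i, xs!Suc i) \<in> R)"

lemma chain_Cons: "chain R (x # y # ys) \<longleftrightarrow> (x,y) \<in> R \<and> chain R (y # ys)"
  unfolding chain_def
  apply (rule iffI)
   apply (intro conjI)
    apply force
   apply (metis Suc_less_eq length_Cons nth_Cons_Suc)
  apply clarify
  subgoal for i by (cases i) auto
  done

lemma chain_drop: "chain R xs \<Longrightarrow> chain R (drop j xs)"
  unfolding chain_def by (simp add: add.commute)

lemma chain_rtrancl:
  assumes "chain R xs" "i \<le> j" "j < length xs"
  shows "(xs!i, xs!j) \<in> R\<^sup>*"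
  using assms(2,3)
proof (induction j)
  case 0 then show ?case by simp
next
  case (Suc j)
  show ?case
  proof (cases "i = Suc j")
    case True then show ?thesis by simp
  next
    case False
    then have "(xs!i, xs!j) \<in> R\<^sup>*" using Suc by simp
    moreover have "(xs!j, xs!Suc j) \<in> R" using assms(1) Suc.prems unfolding chain_def by blast
    ultimately show ?thesis by simp
  qed
qed

lemma path_of_rtrancl:
  assumes "(u, w) \<in> R\<^sup>*"
  shows "\<exists>xs. xs \<noteq> [] \<and> hd xs = u \<and> last xs = w \<and> distinct xs \<and> chain R xs"
  using assms
proof (induction rule: converse_rtrancl_induct)
  case base
  show ?case by (rule exI[of _ "[w]"]) (simp add: chain_def)
next
  case (step x y)
  then obtain ys where ys: "ys \<noteq> []" "hd ys = y" "last ys = w" "distinct ys" "chain R ys" by blast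
  show ?case
  proof (cases "x \<in> set ys")
    case True
    then obtain j where j: "j < length ys" "ys!j = x" by (metis in_set_conv_nth)
    have "drop j ys \<noteq> []" using j by simp
    moreover have "hd (drop j ys) = x" using j by (simp add: hd_drop_conv_nth)
    moreover have "last (drop j ys) = w" using j ys by simp
    moreover have "distinct (drop j ys)" using ys by simp
    moreover have "chain R (drop j ys)" using ys chain_drop by blast
    ultimately show ?thesis by blast
  next
    case False
    have "chain R (x # ys)" using ys step(1)
      by (cases ys) (auto simp: chain_Cons)
    then show ?thesis using ys False by (intro exI[of _ "x # ys"]) auto
  qed
qed

lemma avoid_first:
  assumes "(u, w) \<in> R\<^sup>*"
  shows "(u, w) \<in> {p\<in>R. fst p \<notin> D}\<^sup>* \<or> (\<exists>v\<in>D. (u, v) \<in> {p\<in>R. fst p \<notin> D}\<^sup>* \<and> (v, w) \<in> R\<^sup>*)"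
  using assms
proof (induction rule: converse_rtrancl_induct)
  case base then show ?case by simp
next
  case (step x y)
  show ?case
  proof (cases "x \<in> D")
    case True
    then show ?thesis using step(1,2) by (meson converse_rtrancl_into_rtrancl rtrancl.rtrancl_refl)
  next
    case False
    then have "(x,y) \<in> {p\<in>R. fst p \<notin> D}" using step(1) by simp
    then show ?thesis using step(3) by (meson converse_rtrancl_into_rtrancl)
  qed
qed

lemma reach_sink:
  assumes "finite R" "acyclic R"
  shows "\<exists>w. (u, w) \<in> R\<^sup>* \<and> (\<forall>z. (w, z) \<notin> R)"
proof -
  have wf: "wf (R\<inverse>)" using assms finite_acyclic_wf_converse by blast
  show ?thesis
  proof (induction u rule: wf_induct[OF wf])
    case (1 x)
    show ?case
    proof (cases "\<exists>z. (x, z) \<in> R")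
      case True
      then obtain z where z: "(x,z) \<in> R" by blast
      then obtain w where "(z, w) \<in> R\<^sup>*" "\<forall>y. (w, y) \<notin> R" using 1 by blast
      then show ?thesis using z by (meson converse_rtrancl_into_rtrancl)
    next
      case False then show ?thesis by blast
    qed
  qed
qed

lemma sink_unique:
  assumes "single_valued R" "(u, w1) \<in> R\<^sup>*" "(u, w2) \<in> R\<^sup>*"
    "\<forall>z. (w1, z) \<notin> R" "\<forall>z. (w2, z) \<notin> R"
  shows "w1 = w2"
  using single_valued_confluent[OF assms(1-3)] assms(4,5)
  by (metis converse_rtranclE)




definition dedges :: "('e \<Rightarrow> nat) \<Rightarrow> ('e \<Rightarrow> nat) \<Rightarrow> 'e set \<Rightarrow> (nat \<times> nat) set" where
  "dedges s t Z = {(s e, t e) | e. e \<in> Z}"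

definition funct :: "('e \<Rightarrow> nat) \<Rightarrow> 'e set \<Rightarrow> bool" where
  "funct s Z \<longleftrightarrow> (\<forall>e1\<in>Z. \<forall>e2\<in>Z. s e1 = s e2 \<longrightarrow> e1 = e2)"

lemma uedges_iff: "(a,b) \<in> uedges s t Z \<longleftrightarrow> (\<exists>e\<in>Z. s e = a \<and> t e = b) \<or> (\<exists>e\<in>Z. t e = a \<and> s e = b)"
  unfolding uedges_def by blast

lemma dedges_iff: "(a,b) \<in> dedges s t Z \<longleftrightarrow> (\<exists>e\<in>Z. s e = a \<and> t e = b)"
  unfolding dedges_def by blast

lemma dedges_mono: "Z \<subseteq> Z' \<Longrightarrow> dedges s t Z \<subseteq> dedges s t Z'"
  unfolding dedges_def by blast

lemma dedges_sub_uedges: "dedges s t Z \<subseteq> uedges s t Z"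
  unfolding dedges_def uedges_def by blast

lemma sym_uedges: "sym (uedges s t Z)"
  unfolding sym_def uedges_def by blast

lemma uedges_rtrancl_sym: "(a,b) \<in> (uedges s t Z)\<^sup>* \<Longrightarrow> (b,a) \<in> (uedges s t Z)\<^sup>*"
  using sym_rtrancl[OF sym_uedges] unfolding sym_def by blast

lemma d_to_u: "(a,b) \<in> (dedges s t Z)\<^sup>* \<Longrightarrow> (a,b) \<in> (uedges s t Z)\<^sup>*"
  using rtrancl_mono[OF dedges_sub_uedges] by blast

lemma finite_dedges: "finite Z \<Longrightarrow> finite (dedges s t Z)"
proof -
  assume "finite Z"
  have "dedges s t Z = (\<lambda>e. (s e, t e)) ` Z" unfolding dedges_def by blast
  then show ?thesis using \<open>finite Z\<close> by simp
qed

lemma funct_sv: "funct s Z \<Longrightarrow> single_valued (dedges s t Z)"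
  unfolding funct_def single_valued_def dedges_def by blast

lemma funct_mono: "funct s Z \<Longrightarrow> Z' \<subseteq> Z \<Longrightarrow> funct s Z'"
  unfolding funct_def by blast

lemma no_succ_iff: "(\<forall>z. (w, z) \<notin> dedges s t Z) \<longleftrightarrow> \<not> (\<exists>e\<in>Z. s e = w)"
  unfolding dedges_def by blast

locale gr =
  fixes s t :: "'e \<Rightarrow> nat" and E :: "'e set" and N :: "nat set"
  assumes finE: "finite E" and finN: "finite N"
    and ends: "\<forall>e\<in>E. s e \<in> N \<and> t e \<in> N"
    and noloop: "\<forall>e\<in>E. s e \<noteq> t e"
begin

lemma u_in_N:
  assumes "(x,y) \<in> (uedges s t Z)\<^sup>*" "Z \<subseteq> E" "x \<in> N"
  shows "y \<in> N"
  using assms(1)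
proof (induction rule: rtrancl_induct)
  case base then show ?case using assms by simp
next
  case (step y z)
  then show ?case using step.hyps(2) step.IH assms(2) ends unfolding uedges_iff by blast
qed

lemma d_in_N: "(x,y) \<in> (dedges s t Z)\<^sup>* \<Longrightarrow> Z \<subseteq> E \<Longrightarrow> x \<in> N \<Longrightarrow> y \<in> N"
  by (rule u_in_N[OF d_to_u])

lemma bridge:
  assumes ZE: "Z \<subseteq> E" and fo: "forest s t Z" and e: "e \<in> Z"
    and p: "(t e, s e) \<in> (uedges s t (Z - {e}))\<^sup>*"
  shows False
proof -
  obtain xs where xs: "xs \<noteq> []" "hd xs = t e" "last xs = s e" "distinct xs"
    "chain (uedges s t (Z - {e})) xs"
    using path_of_rtrancl[OF p] by blast
  define n where "n = length xs"
  have ne: "s e \<noteq> t e" using noloop e ZE by blast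
  have n2: "n \<ge> 2"
  proof (rule ccontr)
    assume "\<not> n \<ge> 2"
    moreover have "n \<noteq> 0" using xs(1) n_def by simp
    ultimately have "n = 1" by arith
    then have "hd xs = last xs" using xs(1) n_def by (cases xs) auto
    then show False using xs ne by simp
  qed
  define fe where "fe i = (SOME f. f \<in> Z - {e} \<and> {s f, t f} = {xs!i, xs!Suc i})" for i
  have fe: "fe i \<in> Z - {e} \<and> {s (fe i), t (fe i)} = {xs!i, xs!Suc i}" if "Suc i < n" for i
  proof -
    have "(xs!i, xs!Suc i) \<in> uedges s t (Z - {e})" using xs(5) that n_def unfolding chain_def by blast
    then obtain f where f: "f \<in> Z - {e}" "(s f = xs!i \<and> t f = xs!Suc i) \<or> (t f = xs!i \<and> s f = xs!Suc i)"
      unfolding uedges_iff by blast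
    then have "{s f, t f} = {xs!i, xs!Suc i}" by auto
    then have ex: "\<exists>f. f \<in> Z - {e} \<and> {s f, t f} = {xs!i, xs!Suc i}" using f(1) by blast
    show ?thesis unfolding fe_def by (rule someI_ex[OF ex])
  qed
  have fe_in: "fe i \<in> Z - {e}" if "i < n - 1" for i
  proof -
    have "Suc i < n" using that by linarith
    then show ?thesis using fe by blast
  qed
  have setfe: "set (map fe [0..<n-1]) \<subseteq> Z - {e}"
  proof
    fix x assume "x \<in> set (map fe [0..<n-1])"
    then obtain i where "i < n - 1" "x = fe i" by auto
    then show "x \<in> Z - {e}" using fe_in by blast
  qed
  have dmap: "distinct (map fe [0..<n-1])"
    unfolding distinct_map
  proof
    show "inj_on fe (set [0..<n - 1])"
    proof (rule inj_onI)
      fix i j assume ij: "i \<in> set [0..<n-1]" "j \<in> set [0..<n-1]" "fe i = fe j"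
      have ii: "i < n" "Suc i < n" "j < n" "Suc j < n" using ij(1,2) by auto
      have eq: "{xs!i, xs!Suc i} = {xs!j, xs!Suc j}" using fe[OF ii(2)] fe[OF ii(4)] ij(3) by simp
      have d: "\<And>a b. a < n \<Longrightarrow> b < n \<Longrightarrow> xs!a = xs!b \<Longrightarrow> a = b"
        using nth_eq_iff_index_eq xs(4) n_def by metis
      have "(xs!i = xs!j \<and> xs!Suc i = xs!Suc j) \<or> (xs!i = xs!Suc j \<and> xs!Suc i = xs!j)"
        using eq by (simp add: doubleton_eq_iff)
      then show "i = j"
      proof
        assume "xs!i = xs!j \<and> xs!Suc i = xs!Suc j"
        then show "i = j" using d ii by blast
      next
        assume a: "xs!i = xs!Suc j \<and> xs!Suc i = xs!j"
        have "i = Suc j" using d ii a by blast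
        moreover have "Suc i = j" using d ii a by blast
        ultimately show "i = j" by simp
      qed
    qed
  qed simp
  define es where "es = e # map fe [0..<n-1]"
  define vs where "vs = s e # xs"
  have les: "length es = n" unfolding es_def using n2 by simp
  have "ucycle s t Z es vs"
    unfolding ucycle_def
  proof (intro conjI)
    show "es \<noteq> []" unfolding es_def by simp
    show "length vs = length es + 1" unfolding les vs_def n_def by simp
    show "distinct es" unfolding es_def using dmap setfe by auto
    show "set es \<subseteq> Z" unfolding es_def using setfe e by auto
    show "hd vs = last vs" unfolding vs_def using xs by simp
    show "distinct (tl vs)" unfolding vs_def using xs by simp
    show "\<forall>i<length es. {s (es ! i), t (es ! i)} = {vs ! i, vs ! Suc i}"
    proof (intro allI impI)
      fix i assume i: "i < length es"
      show "{s (es ! i), t (es ! i)} = {vs ! i, vs ! Suc i}"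
      proof (cases i)
        case 0
        have "vs ! 0 = s e" unfolding vs_def by simp
        moreover have "vs ! Suc 0 = t e" unfolding vs_def using xs(1,2) by (simp add: hd_conv_nth)
        moreover have "es ! 0 = e" unfolding es_def by simp
        ultimately show ?thesis using 0 by simp
      next
        case (Suc j)
        then have j: "Suc j < n" using i les by simp
        have "es ! Suc j = fe j" unfolding es_def using j by simp
        moreover have "vs ! Suc j = xs ! j" "vs ! Suc (Suc j) = xs ! Suc j" unfolding vs_def by simp_all
        ultimately show ?thesis using fe[OF j] Suc by simp
      qed
    qed
  qed
  then show False using fo unfolding forest_def by blast
qed

lemma forest_acyclic:
  assumes ZE: "Z \<subseteq> E" and fo: "forest s t Z"
  shows "acyclic (dedges s t Z)"
proof (rule acyclicI, rule allI, rule notI)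
  fix x assume "(x, x) \<in> (dedges s t Z)\<^sup>+"
  then obtain y where xy: "(x,y) \<in> dedges s t Z" "(y,x) \<in> (dedges s t Z)\<^sup>*"
    by (meson tranclD)
  then obtain e where e: "e \<in> Z" "s e = x" "t e = y" unfolding dedges_iff by blast
  let ?R = "{p \<in> dedges s t Z. fst p \<notin> {x}}"
  have "(y, x) \<in> ?R\<^sup>*" using avoid_first[OF xy(2), of "{x}"] by blast
  moreover have "?R \<subseteq> uedges s t (Z - {e})"
    unfolding dedges_def uedges_def using e by auto
  ultimately have "(t e, s e) \<in> (uedges s t (Z - {e}))\<^sup>*" using e rtrancl_mono by blast
  then show False using bridge[OF ZE fo e(1)] by blast
qed

end



definition TP :: "('e \<Rightarrow> nat) \<Rightarrow> ('e \<Rightarrow> nat) \<Rightarrow> 'e set \<Rightarrow> nat set \<Rightarrow> nat set \<Rightarrow> nat set \<Rightarrow> 'e set \<Rightarrow> bool" where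
  "TP s t E N F B Z \<longleftrightarrow> Z \<subseteq> E \<and> (\<forall>v\<in>B. \<not> (\<exists>e\<in>Z. s e = v)) \<and> (\<forall>v\<in>N - B. \<exists>e\<in>Z. s e = v)
     \<and> funct s Z \<and> acyclic (dedges s t Z) \<and> (\<forall>r\<in>B. \<exists>f\<in>F. (f, r) \<in> (dedges s t Z)\<^sup>*)"

context gr begin

lemma ucomp_self: "x \<in> N \<Longrightarrow> x \<in> ucomp s t Z N x"
  unfolding ucomp_def by simp

lemma ucomp_eq:
  assumes "x \<in> N" "y \<in> ucomp s t Z N x"
  shows "ucomp s t Z N y = ucomp s t Z N x"
proof -
  have y: "y \<in> N" "(x,y) \<in> (uedges s t Z)\<^sup>*" using assms unfolding ucomp_def by auto
  have yx: "(y,x) \<in> (uedges s t Z)\<^sup>*" using uedges_rtrancl_sym[OF y(2)] .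
  show ?thesis
  proof
    show "ucomp s t Z N y \<subseteq> ucomp s t Z N x"
    proof
      fix w assume "w \<in> ucomp s t Z N y"
      then have "w \<in> N" "(y,w) \<in> (uedges s t Z)\<^sup>*" unfolding ucomp_def by auto
      then show "w \<in> ucomp s t Z N x" using y(2) unfolding ucomp_def
        using rtrancl_trans by fastforce
    qed
  next
    show "ucomp s t Z N x \<subseteq> ucomp s t Z N y"
    proof
      fix w assume "w \<in> ucomp s t Z N x"
      then have "w \<in> N" "(x,w) \<in> (uedges s t Z)\<^sup>*" unfolding ucomp_def by auto
      then show "w \<in> ucomp s t Z N y" using yx unfolding ucomp_def
        using rtrancl_trans by fastforce
    qed
  qed
qed

end

locale grFB = gr s t E N for s t :: "'e \<Rightarrow> nat" and E N +
  fixes F B :: "nat set"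
  assumes BN: "B \<subseteq> N" and FN: "F \<subseteq> N"
begin

lemma finB: "finite B" using BN finN finite_subset by blast

lemma Theta_TP:
  assumes Z: "Z \<in> Theta E s t N F B"
  shows "TP s t E N F B Z"
proof -
  have ZE: "Z \<subseteq> E" and fo: "forest s t Z" and cardc: "card (comps s t Z N) = card B"
    and cond: "\<forall>C\<in>comps s t Z N. C \<inter> F \<noteq> {} \<and>
            (\<exists>r\<in>B \<inter> C. \<forall>v\<in>C. (\<not> (\<exists>e\<in>Z. s e = v)) \<longleftrightarrow> v = r)"
    using Z unfolding Theta_def by auto
  define rt where "rt C = (SOME r. r \<in> B \<inter> C \<and> (\<forall>v\<in>C. (\<not> (\<exists>e\<in>Z. s e = v)) \<longleftrightarrow> v = r))" for C
  have rt: "rt C \<in> B \<inter> C \<and> (\<forall>v\<in>C. (\<not> (\<exists>e\<in>Z. s e = v)) \<longleftrightarrow> v = rt C)" if Cc: "C \<in> comps s t Z N" for C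
  proof -
    obtain r where r: "r \<in> B \<inter> C" "\<forall>v\<in>C. (\<not> (\<exists>e\<in>Z. s e = v)) \<longleftrightarrow> v = r"
      using bspec[OF cond Cc] by (elim conjE bexE)
    have "\<exists>r. r \<in> B \<inter> C \<and> (\<forall>v\<in>C. (\<not> (\<exists>e\<in>Z. s e = v)) \<longleftrightarrow> v = r)"
      using r by (intro exI[of _ r] conjI)
    then show ?thesis unfolding rt_def by (rule someI_ex)
  qed
  have compsD: "\<exists>x\<in>N. C = ucomp s t Z N x" if "C \<in> comps s t Z N" for C
    using that unfolding comps_def by blast
  have inj: "inj_on rt (comps s t Z N)"
  proof (rule inj_onI)
    fix C1 C2 assume c: "C1 \<in> comps s t Z N" "C2 \<in> comps s t Z N" "rt C1 = rt C2"
    obtain x1 where x1: "x1 \<in> N" "C1 = ucomp s t Z N x1" using compsD c(1) by blast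
    obtain x2 where x2: "x2 \<in> N" "C2 = ucomp s t Z N x2" using compsD c(2) by blast
    have r1: "rt C1 \<in> ucomp s t Z N x1" using rt[OF c(1)] x1(2) by blast
    have r2: "rt C1 \<in> ucomp s t Z N x2" using rt[OF c(2)] c(3) x2(2) by simp
    show "C1 = C2" using ucomp_eq[OF x1(1) r1] ucomp_eq[OF x2(1) r2] x1(2) x2(2) by simp
  qed
  have finc: "finite (comps s t Z N)" unfolding comps_def using finN by simp
  have img: "rt ` comps s t Z N = B"
  proof (rule card_subset_eq[OF finB])
    show "rt ` comps s t Z N \<subseteq> B" using rt by blast
    show "card (rt ` comps s t Z N) = card B" using card_image[OF inj] cardc by simp
  qed
  have noutB: "\<forall>v\<in>B. \<not> (\<exists>e\<in>Z. s e = v)"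
  proof
    fix v assume "v \<in> B"
    then obtain C where C: "C \<in> comps s t Z N" "v = rt C" using img by blast
    then show "\<not> (\<exists>e\<in>Z. s e = v)" using rt[OF C(1)] by blast
  qed
  have outN: "\<forall>v\<in>N - B. \<exists>e\<in>Z. s e = v"
  proof
    fix v assume v: "v \<in> N - B"
    let ?C = "ucomp s t Z N v"
    have C: "?C \<in> comps s t Z N" using v unfolding comps_def by blast
    have vC: "v \<in> ?C" using ucomp_self v by blast
    have "rt ?C \<in> B" using rt[OF C] by simp
    then have ne: "v \<noteq> rt ?C" using v by auto
    have P: "\<forall>w\<in>?C. (\<not> (\<exists>e\<in>Z. s e = w)) \<longleftrightarrow> w = rt ?C" using rt[OF C] by (rule conjunct2)
    show "\<exists>e\<in>Z. s e = v" using P[rule_format, OF vC] ne by simp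
  qed
  have acy: "acyclic (dedges s t Z)" using forest_acyclic[OF ZE fo] .
  have sinkC: "w = rt C"
    if C: "C \<in> comps s t Z N" and u: "u \<in> C" and Z': "Z' \<subseteq> Z"
      and uw: "(u, w) \<in> (dedges s t Z')\<^sup>*" and nw: "\<not> (\<exists>e\<in>Z. s e = w)" for C u w Z'
  proof -
    obtain x where x: "x \<in> N" "C = ucomp s t Z N x" using compsD C by blast
    have "(u, w) \<in> (dedges s t Z)\<^sup>*" using uw rtrancl_mono[OF dedges_mono[OF Z']] by blast
    then have uw2: "(u, w) \<in> (uedges s t Z)\<^sup>*" using d_to_u by blast
    have "u \<in> N" "(x,u) \<in> (uedges s t Z)\<^sup>*" using u x unfolding ucomp_def by auto
    then have "w \<in> N" "(x,w) \<in> (uedges s t Z)\<^sup>*" using u_in_N[OF uw2 ZE] uw2 by auto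
    then have "w \<in> C" using x unfolding ucomp_def by simp
    then show ?thesis using rt[OF C] nw by blast
  qed
  have fct: "funct s Z"
    unfolding funct_def
  proof (intro ballI impI, rule ccontr)
    fix e1 e2 assume e: "e1 \<in> Z" "e2 \<in> Z" "s e1 = s e2" "e1 \<noteq> e2"
    define v where "v = s e1"
    define Z' where "Z' = Z - {e1}"
    have vN: "v \<in> N" using ends e ZE v_def by blast
    let ?C = "ucomp s t Z N v"
    have C: "?C \<in> comps s t Z N" using vN unfolding comps_def by blast
    have finZ': "finite (dedges s t Z')" using finite_dedges finE ZE finite_subset Z'_def
      by (metis Diff_subset)
    have acyZ': "acyclic (dedges s t Z')" using acyclic_subset[OF acy dedges_mono] Z'_def by blast
    have reach: "(u, rt ?C) \<in> (dedges s t Z')\<^sup>*" if u: "u \<in> ?C" for u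
    proof -
      obtain w where w: "(u, w) \<in> (dedges s t Z')\<^sup>*" "\<forall>z. (w, z) \<notin> dedges s t Z'"
        using reach_sink[OF finZ' acyZ'] by blast
      have nw: "\<not> (\<exists>e\<in>Z. s e = w)"
      proof
        assume "\<exists>e\<in>Z. s e = w"
        then obtain e where e': "e \<in> Z" "s e = w" by blast
        show False
        proof (cases "e = e1")
          case True
          then have "e2 \<in> Z'" "s e2 = w" using e e' Z'_def by auto
          then show False using w(2) unfolding dedges_def by blast
        next
          case False
          then have "e \<in> Z'" using e' Z'_def by simp
          then show False using w(2) e' unfolding dedges_def by blast
        qed
      qed
      have "w = rt ?C" using sinkC[OF C u _ w(1) nw] Z'_def by blast
      then show ?thesis using w(1) by simp
    qed
    have vC: "v \<in> ?C" using ucomp_self vN by blast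
    have "(v, t e1) \<in> uedges s t Z" unfolding uedges_iff using e v_def by blast
    then have aC: "t e1 \<in> ?C" using vN ends e ZE unfolding ucomp_def by auto
    have "(t e1, rt ?C) \<in> (uedges s t Z')\<^sup>*" using d_to_u reach[OF aC] by blast
    moreover have "(rt ?C, v) \<in> (uedges s t Z')\<^sup>*" using uedges_rtrancl_sym d_to_u reach[OF vC] by blast
    ultimately have "(t e1, s e1) \<in> (uedges s t (Z - {e1}))\<^sup>*" using v_def Z'_def
      by (meson rtrancl_trans)
    then show False using bridge[OF ZE fo e(1)] by blast
  qed
  have Fc: "\<forall>r\<in>B. \<exists>f\<in>F. (f, r) \<in> (dedges s t Z)\<^sup>*"
  proof
    fix r assume r: "r \<in> B"
    let ?C = "ucomp s t Z N r"
    have rN: "r \<in> N" using r BN by blast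
    have C: "?C \<in> comps s t Z N" using rN unfolding comps_def by blast
    have rrt: "r = rt ?C" using sinkC[OF C ucomp_self[OF rN] subset_refl rtrancl_refl] noutB r by blast
    obtain f where f: "f \<in> ?C" "f \<in> F" using cond C by blast
    obtain w where w: "(f, w) \<in> (dedges s t Z)\<^sup>*" "\<forall>z. (w, z) \<notin> dedges s t Z"
      using reach_sink[OF finite_dedges acy] finE ZE finite_subset by blast
    have "\<not> (\<exists>e\<in>Z. s e = w)" using w(2) no_succ_iff by metis
    then have "w = r" using sinkC[OF C f(1) subset_refl w(1)] rrt by simp
    then show "\<exists>f\<in>F. (f, r) \<in> (dedges s t Z)\<^sup>*" using w(1) f(2) by blast
  qed
  show ?thesis unfolding TP_def using ZE noutB outN fct acy Fc by blast
qed

end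



context grFB begin

lemma TP_Theta:
  assumes T: "TP s t E N F B Z"
  shows "Z \<in> Theta E s t N F B"
proof -
  have ZE: "Z \<subseteq> E" and noB: "\<forall>v\<in>B. \<not> (\<exists>e\<in>Z. s e = v)" and outN: "\<forall>v\<in>N - B. \<exists>e\<in>Z. s e = v"
    and fct: "funct s Z" and acy: "acyclic (dedges s t Z)"
    and Fc: "\<forall>r\<in>B. \<exists>f\<in>F. (f, r) \<in> (dedges s t Z)\<^sup>*"
    using T unfolding TP_def by auto
  have sv: "single_valued (dedges s t Z)" using funct_sv[OF fct] .
  have fin: "finite (dedges s t Z)" using finite_dedges finE ZE finite_subset by blast
  have sinkB: "\<forall>z. (r, z) \<notin> dedges s t Z" if "r \<in> B" for r
    using noB that no_succ_iff by metis
  have ex_root: "\<exists>r\<in>B. (x, r) \<in> (dedges s t Z)\<^sup>*" if x: "x \<in> N" for x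
  proof -
    obtain w where w: "(x, w) \<in> (dedges s t Z)\<^sup>*" "\<forall>z. (w, z) \<notin> dedges s t Z"
      using reach_sink[OF fin acy] by blast
    have wN: "w \<in> N" using d_in_N[OF w(1) ZE x] .
    have "\<not> (\<exists>e\<in>Z. s e = w)" using w(2) no_succ_iff by metis
    then have "w \<in> B" using outN wN by blast
    then show ?thesis using w(1) by blast
  qed
  have uniq: "r1 = r2" if "r1 \<in> B" "r2 \<in> B" "(x, r1) \<in> (dedges s t Z)\<^sup>*" "(x, r2) \<in> (dedges s t Z)\<^sup>*" for x r1 r2
    using sink_unique[OF sv that(3,4) sinkB[OF that(1)] sinkB[OF that(2)]] .
  define rtn where "rtn x = (THE r. r \<in> B \<and> (x, r) \<in> (dedges s t Z)\<^sup>*)" for x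
  have rtn: "rtn x \<in> B \<and> (x, rtn x) \<in> (dedges s t Z)\<^sup>*" if xN: "x \<in> N" for x
  proof -
    obtain r where r: "r \<in> B" "(x, r) \<in> (dedges s t Z)\<^sup>*" using ex_root[OF xN] by blast
    have "\<exists>!r. r \<in> B \<and> (x, r) \<in> (dedges s t Z)\<^sup>*"
      using r uniq by blast
    then show ?thesis unfolding rtn_def by (rule theI')
  qed
  have rtn_eq: "rtn x = r" if "x \<in> N" "r \<in> B" "(x, r) \<in> (dedges s t Z)\<^sup>*" for x r
    using uniq[OF _ that(2) _ that(3)] rtn[OF that(1)] by blast
  have rtnB: "rtn r = r" if "r \<in> B" for r
    using rtn_eq[of r r] that BN by blast
  have edge_rt: "rtn (s e) = rtn (t e)" if "e \<in> Z" for e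
  proof -
    have N2: "s e \<in> N" "t e \<in> N" using that ZE ends by auto
    have "(s e, t e) \<in> dedges s t Z" using that unfolding dedges_iff by blast
    then have "(s e, rtn (t e)) \<in> (dedges s t Z)\<^sup>*" using rtn[OF N2(2)] by (meson converse_rtrancl_into_rtrancl)
    then show ?thesis using rtn_eq[OF N2(1)] rtn[OF N2(2)] by blast
  qed
  have u_rt: "rtn y = rtn x" if "(x, y) \<in> (uedges s t Z)\<^sup>*" for x y
    using that
  proof (induction rule: rtrancl_induct)
    case base then show ?case by simp
  next
    case (step y z)
    from step(2) obtain e where "e \<in> Z" "(s e = y \<and> t e = z) \<or> (t e = y \<and> s e = z)"
      unfolding uedges_iff by blast
    then have "rtn z = rtn y" using edge_rt by metis
    then show ?case using step(3) by simp
  qed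
  define basin where "basin r = {y \<in> N. rtn y = r}" for r
  have ucomp_basin: "ucomp s t Z N x = basin (rtn x)" if x: "x \<in> N" for x
  proof
    show "ucomp s t Z N x \<subseteq> basin (rtn x)"
      unfolding ucomp_def basin_def using u_rt by blast
    show "basin (rtn x) \<subseteq> ucomp s t Z N x"
    proof
      fix y assume "y \<in> basin (rtn x)"
      then have y: "y \<in> N" "rtn y = rtn x" unfolding basin_def by auto
      have "(x, rtn x) \<in> (uedges s t Z)\<^sup>*" using rtn[OF x] d_to_u by blast
      moreover have "(rtn x, y) \<in> (uedges s t Z)\<^sup>*"
        using rtn[OF y(1)] y(2) d_to_u uedges_rtrancl_sym by metis
      ultimately show "y \<in> ucomp s t Z N x" unfolding ucomp_def using y(1)
        using rtrancl_trans by fastforce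
    qed
  qed
  have comps_eq: "comps s t Z N = basin ` B"
  proof
    show "comps s t Z N \<subseteq> basin ` B"
      unfolding comps_def using ucomp_basin rtn by blast
    show "basin ` B \<subseteq> comps s t Z N"
    proof
      fix C assume "C \<in> basin ` B"
      then obtain r where r: "r \<in> B" "C = basin r" by blast
      then have "C = ucomp s t Z N r" using ucomp_basin[of r] rtnB BN by auto
      then show "C \<in> comps s t Z N" unfolding comps_def using r BN by blast
    qed
  qed
  have inj: "inj_on basin B"
  proof (rule inj_onI)
    fix r1 r2 assume r: "r1 \<in> B" "r2 \<in> B" "basin r1 = basin r2"
    have "r1 \<in> basin r1" unfolding basin_def using rtnB r(1) BN by auto
    then have "r1 \<in> basin r2" using r(3) by simp
    then have "rtn r1 = r2" unfolding basin_def by simp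
    then show "r1 = r2" using rtnB r(1) by simp
  qed
  have card: "card (comps s t Z N) = card B" using comps_eq card_image[OF inj] by simp
  have fo: "forest s t Z"
    unfolding forest_def
  proof (rule notI, elim exE)
    fix es vs assume uc: "ucycle s t Z es vs"
    have ne: "es \<noteq> []" and len: "length vs = length es + 1" and des: "distinct es"
      and sZ: "set es \<subseteq> Z" and hl: "hd vs = last vs" and dtl: "distinct (tl vs)"
      and ed: "\<forall>i<length es. {s (es ! i), t (es ! i)} = {vs ! i, vs ! Suc i}"
      using uc unfolding ucycle_def by auto
    define V where "V = set (tl vs)"
    have vsne: "vs \<noteq> []" using len by auto
    have tlne: "tl vs \<noteq> []" using len ne by (cases vs) auto
    have setvs: "set vs = V"
    proof -
      have "vs = hd vs # tl vs" using vsne by simp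
      moreover have "last vs = last (tl vs)" using tlne vsne by (metis last_tl)
      moreover have "last (tl vs) \<in> set (tl vs)" using tlne by simp
      ultimately have "set vs = insert (last (tl vs)) (set (tl vs))" using hl
        by (metis list.simps(15))
      then show ?thesis unfolding V_def using \<open>last (tl vs) \<in> set (tl vs)\<close> by auto
    qed
    have cardV: "card V = length es" unfolding V_def using distinct_card[OF dtl] len by simp
    have endsV: "s e' \<in> V \<and> t e' \<in> V" if ein: "e' \<in> set es" for e'
    proof -
      obtain i where i: "i < length es" "es ! i = e'" using ein by (metis in_set_conv_nth)
      have eq: "{s e', t e'} = {vs ! i, vs ! Suc i}" using ed i by auto
      have "{vs ! i, vs ! Suc i} \<subseteq> set vs" using i len by auto
      then have "{s e', t e'} \<subseteq> set vs" using eq by simp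
      then show ?thesis using setvs by auto
    qed
    have injs: "inj_on s (set es)" using fct sZ unfolding funct_def inj_on_def by blast
    have "card (s ` set es) = length es" using card_image[OF injs] distinct_card[OF des] by simp
    moreover have "s ` set es \<subseteq> V" using endsV by blast
    ultimately have sV: "s ` set es = V" using cardV card_subset_eq[of V "s ` set es"] V_def by simp
    have clos: "z \<in> V" if vz: "v \<in> V" "(v, z) \<in> dedges s t Z" for v z
    proof -
      obtain e' where e': "e' \<in> set es" "s e' = v" using sV vz(1) by blast
      obtain f where f: "f \<in> Z" "s f = v" "t f = z" using vz(2) unfolding dedges_iff by blast
      have "f = e'" using fct f e' sZ unfolding funct_def by blast
      then show ?thesis using endsV e'(1) f(3) by blast
    qed
    have v0: "hd (tl vs) \<in> V" unfolding V_def using tlne by simp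
    obtain w where w: "(hd (tl vs), w) \<in> (dedges s t Z)\<^sup>*" "\<forall>z. (w, z) \<notin> dedges s t Z"
      using reach_sink[OF fin acy] by blast
    have "w \<in> V" using w(1)
    proof (induction rule: rtrancl_induct)
      case base then show ?case using v0 .
    next
      case (step y z) then show ?case using clos by blast
    qed
    then obtain e' where "e' \<in> set es" "s e' = w" using sV by blast
    then have "(w, t e') \<in> dedges s t Z" using sZ unfolding dedges_iff by blast
    then show False using w(2) by blast
  qed
  have cond: "\<forall>C\<in>comps s t Z N. C \<inter> F \<noteq> {} \<and>
            (\<exists>r\<in>B \<inter> C. \<forall>v\<in>C. (\<not> (\<exists>e\<in>Z. s e = v)) \<longleftrightarrow> v = r)"
  proof
    fix C assume "C \<in> comps s t Z N"
    then obtain r where r: "r \<in> B" "C = basin r" using comps_eq by blast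
    obtain f where f: "f \<in> F" "(f, r) \<in> (dedges s t Z)\<^sup>*" using Fc r(1) by blast
    have "f \<in> N" using f FN by blast
    then have "f \<in> C" using rtn_eq[OF _ r(1) f(2)] r(2) unfolding basin_def by simp
    then have c1: "C \<inter> F \<noteq> {}" using f by blast
    have rC: "r \<in> B \<inter> C" using r rtnB BN unfolding basin_def by auto
    have "\<forall>v\<in>C. (\<not> (\<exists>e\<in>Z. s e = v)) \<longleftrightarrow> v = r"
    proof
      fix v assume v: "v \<in> C"
      then have vN: "v \<in> N" and rv: "rtn v = r" using r(2) unfolding basin_def by auto
      show "(\<not> (\<exists>e\<in>Z. s e = v)) \<longleftrightarrow> v = r"
      proof
        assume "\<not> (\<exists>e\<in>Z. s e = v)"
        then have "v \<in> B" using outN vN by blast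
        then show "v = r" using rtnB rv by simp
      next
        assume "v = r"
        then show "\<not> (\<exists>e\<in>Z. s e = v)" using noB r(1) by blast
      qed
    qed
    then show "C \<inter> F \<noteq> {} \<and> (\<exists>r\<in>B \<inter> C. \<forall>v\<in>C. (\<not> (\<exists>e\<in>Z. s e = v)) \<longleftrightarrow> v = r)"
      using c1 rC by blast
  qed
  show ?thesis unfolding Theta_def using ZE fo card cond by blast
qed

end



lemma closed_no_sink:
  assumes "finite R" "acyclic R" "v0 \<in> V" "\<forall>v\<in>V. \<exists>z. (v, z) \<in> R" "\<forall>v\<in>V. \<forall>z. (v, z) \<in> R \<longrightarrow> z \<in> V"
  shows False
proof -
  obtain w where w: "(v0, w) \<in> R\<^sup>*" "\<forall>z. (w, z) \<notin> R" using reach_sink[OF assms(1,2)] by blast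
  have "w \<in> V" using w(1)
  proof (induction rule: rtrancl_induct)
    case base then show ?case using assms(3) .
  next
    case (step y z) then show ?case using assms(5) by blast
  qed
  then show False using assms(4) w(2) by blast
qed

lemma dcycle_trancl:
  assumes dc: "dcycle s t es" and sub: "set es \<subseteq> T"
  shows "(s (hd es), s (hd es)) \<in> (dedges s t T)\<^sup>+"
proof -
  have ne: "es \<noteq> []" and cons: "\<forall>i. Suc i < length es \<longrightarrow> t (es ! i) = s (es ! Suc i)"
    and cl: "t (last es) = s (hd es)" using dc unfolding dcycle_def by auto
  have edge: "(s (es!i), t (es!i)) \<in> dedges s t T" if "i < length es" for i
  proof -
    have "es ! i \<in> T" using sub that nth_mem by blast
    then show ?thesis unfolding dedges_iff by blast
  qed
  have step: "(s (hd es), t (es ! i)) \<in> (dedges s t T)\<^sup>+" if "i < length es" for i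
    using that
  proof (induction i)
    case 0 then show ?case using edge[of 0] ne by (simp add: hd_conv_nth)
  next
    case (Suc i)
    then have "(s (hd es), t (es ! i)) \<in> (dedges s t T)\<^sup>+" by simp
    moreover have "t (es ! i) = s (es ! Suc i)" using cons Suc.prems by blast
    ultimately show ?case using edge[OF Suc.prems] by (metis trancl_into_trancl)
  qed
  have "last es = es ! (length es - 1)" using ne by (simp add: last_conv_nth)
  then show ?thesis using step[of "length es - 1"] ne cl by simp
qed

lemma dcycle_targets:
  assumes dc: "dcycle s t es" and e: "e \<in> set es"
  shows "t e \<in> set (map s es)"
proof -
  have ne: "es \<noteq> []" and cons: "\<forall>i. Suc i < length es \<longrightarrow> t (es ! i) = s (es ! Suc i)"
    and cl: "t (last es) = s (hd es)" using dc unfolding dcycle_def by auto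
  obtain i where i: "i < length es" "es ! i = e" using e by (metis in_set_conv_nth)
  show ?thesis
  proof (cases "Suc i < length es")
    case True
    then show ?thesis using cons i by (metis length_map nth_map nth_mem)
  next
    case False
    then have "e = last es" using i ne by (metis Suc_lessI last_conv_nth diff_Suc_1)
    then show ?thesis using cl ne by simp
  qed
qed

lemma dpath_build:
  assumes fct: "funct s T" and acy: "acyclic (dedges s t T)"
    and uv: "(u, v) \<in> (dedges s t T)\<^sup>*" and e: "e \<in> T" "s e = v"
  shows "\<exists>es. set es \<subseteq> T \<and> dpath s t es u (t e) \<and> e \<in> set es \<and>
           (\<forall>y\<in>pathnodes s t es. (u, y) \<in> (dedges s t T)\<^sup>* \<and> (y, t e) \<in> (dedges s t T)\<^sup>*)"
proof -
  obtain xs where xs: "xs \<noteq> []" "hd xs = u" "last xs = v" "distinct xs" "chain (dedges s t T) xs"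
    using path_of_rtrancl[OF uv] by blast
  define n where "n = length xs"
  have n1: "n \<ge> 1" using xs(1) n_def by (cases xs) auto
  have ve: "(v, t e) \<in> dedges s t T" using e unfolding dedges_iff by blast
  have notin: "t e \<notin> set xs"
  proof
    assume "t e \<in> set xs"
    then obtain j where j: "j < n" "xs ! j = t e" using n_def by (metis in_set_conv_nth)
    have "j \<le> n - 1" "n - 1 < length xs" using j n_def by auto
    then have "(xs ! j, xs ! (n - 1)) \<in> (dedges s t T)\<^sup>*" using chain_rtrancl[OF xs(5)] by blast
    moreover have "xs ! (n - 1) = v" using xs(1,3) n_def by (simp add: last_conv_nth)
    ultimately have "(t e, v) \<in> (dedges s t T)\<^sup>*" using j(2) by simp
    then have "(v, v) \<in> (dedges s t T)\<^sup>+" using rtrancl_into_trancl2[OF ve] by blast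
    then show False using acy unfolding acyclic_def by blast
  qed
  define ys where "ys = xs @ [t e]"
  have lys: "length ys = Suc n" unfolding ys_def n_def by simp
  have dys: "distinct ys" unfolding ys_def using xs(4) notin by simp
  have cys: "chain (dedges s t T) ys"
    unfolding chain_def
  proof (intro allI impI)
    fix i assume i: "Suc i < length ys"
    show "(ys ! i, ys ! Suc i) \<in> dedges s t T"
    proof (cases "Suc i < n")
      case True
      then show ?thesis using xs(5) unfolding chain_def ys_def n_def by (simp add: nth_append)
    next
      case False
      then have "i = n - 1" using i lys by simp
      then have "ys ! i = v" "ys ! Suc i = t e" unfolding ys_def using xs(1,3) n_def n1
        by (simp_all add: nth_append last_conv_nth)
      then show ?thesis using ve by simp
    qed
  qed
  have hys: "ys ! 0 = u" unfolding ys_def using xs(1,2) by (simp add: nth_append hd_conv_nth)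
  have lastys: "ys ! n = t e" unfolding ys_def n_def by simp
  define out where "out y = (THE f. f \<in> T \<and> s f = y)" for y
  have out: "out (ys ! i) \<in> T \<and> s (out (ys ! i)) = ys ! i \<and> t (out (ys ! i)) = ys ! Suc i" if i: "i < n" for i
  proof -
    have "(ys ! i, ys ! Suc i) \<in> dedges s t T" using cys i lys unfolding chain_def by simp
    then obtain f where f: "f \<in> T" "s f = ys ! i" "t f = ys ! Suc i" unfolding dedges_iff by blast
    have "out (ys ! i) = f" unfolding out_def
      using f fct unfolding funct_def by (intro the_equality) auto
    then show ?thesis using f by simp
  qed
  define es where "es = map (\<lambda>i. out (ys ! i)) [0..<n]"
  have les: "length es = n" unfolding es_def by simp
  have esi: "es ! i = out (ys ! i)" if "i < n" for i unfolding es_def using that by simp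
  have sub: "set es \<subseteq> T"
  proof
    fix f assume "f \<in> set es"
    then obtain i where "i < n" "f = es ! i" using les by (metis in_set_conv_nth)
    then show "f \<in> T" using out esi by simp
  qed
  have mt: "map t es = tl ys"
  proof (rule nth_equalityI)
    show "length (map t es) = length (tl ys)" using les lys by simp
    fix i assume "i < length (map t es)"
    then have i: "i < n" using les by simp
    then show "map t es ! i = tl ys ! i" using out[OF i] esi[OF i] lys les by (simp add: nth_tl)
  qed
  have esne: "es \<noteq> []" using les n1 by auto
  have dp: "dpath s t es u (t e)"
    unfolding dpath_def
  proof (intro conjI)
    show "es \<noteq> []" using les n1 by auto
    show "\<forall>i. Suc i < length es \<longrightarrow> t (es ! i) = s (es ! Suc i)"
      using out esi les by simp
    show "s (hd es) = u" using out[of 0] esi[of 0] n1 hys hd_conv_nth[OF esne] by simp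
    show "t (last es) = t e"
    proof -
      have "last es = es ! (n - 1)" using les last_conv_nth[OF esne] by simp
      then show ?thesis using out[of "n - 1"] esi[of "n - 1"] n1 lastys by simp
    qed
    show "distinct (u # map t es)"
    proof -
      have "ys = u # tl ys" using hys lys by (cases ys) auto
      then show ?thesis using dys mt by (metis)
    qed
  qed
  have ein: "e \<in> set es"
  proof -
    have "ys ! (n - 1) = v" unfolding ys_def using xs(1,3) n_def n1 by (simp add: nth_append last_conv_nth)
    then have "out (ys ! (n - 1)) = e" using out[of "n - 1"] n1 e fct unfolding funct_def by auto
    moreover have "n - 1 < n" using n1 by simp
    ultimately have "es ! (n - 1) = e" using esi by simp
    then show ?thesis using nth_mem[of "n - 1" es] les \<open>n - 1 < n\<close> by simp
  qed
  have pn: "pathnodes s t es \<subseteq> set ys"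
  proof
    fix y assume "y \<in> pathnodes s t es"
    then have "y \<in> set (map s es) \<or> y \<in> set (map t es)" unfolding pathnodes_def by simp
    then show "y \<in> set ys"
    proof
      assume "y \<in> set (map s es)"
      then obtain i where i: "i < n" "y = s (es ! i)" using les by (auto simp: in_set_conv_nth)
      then show ?thesis using out[OF i(1)] esi[OF i(1)] lys by simp
    next
      assume "y \<in> set (map t es)"
      then show ?thesis using mt by (metis list.set_sel(2) lys list.size(3) nat.distinct(1))
    qed
  qed
  have reach: "(u, y) \<in> (dedges s t T)\<^sup>* \<and> (y, t e) \<in> (dedges s t T)\<^sup>*" if yin: "y \<in> set ys" for y
  proof -
    obtain j where j: "j < Suc n" "ys ! j = y" using yin lys by (metis in_set_conv_nth)
    have "(ys ! 0, ys ! j) \<in> (dedges s t T)\<^sup>*" using chain_rtrancl[OF cys, of 0 j] j(1) lys by simp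
    moreover have "(ys ! j, ys ! n) \<in> (dedges s t T)\<^sup>*" using chain_rtrancl[OF cys, of j n] j(1) lys by simp
    ultimately show ?thesis using hys lastys j by simp
  qed
  show ?thesis using sub dp ein pn reach by blast
qed




definition Ps :: "(nat \<Rightarrow> nat) \<Rightarrow> nat \<Rightarrow> nat" where
  "Ps ms i = (\<Sum>j\<in>{1..i}. ms j)"

lemma Ps_Suc: "Ps ms (Suc i) = Ps ms i + ms (Suc i)"
  unfolding Ps_def by simp

lemma Ps_mono: "i \<le> j \<Longrightarrow> Ps ms i \<le> Ps ms j"
  unfolding Ps_def by (rule sum_mono2) auto

lemma sum_lessThan_Ps: "i \<ge> 1 \<Longrightarrow> (\<Sum>j\<in>{1..<i}. ms j) = Ps ms (i - 1)"
  unfolding Ps_def by (cases i) (auto simp: atLeastLessThanSuc_atLeastAtMost)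

lemma mtot_Ps: "mtot ms d = ms 0 + Ps ms d"
  unfolding mtot_def Ps_def
  by (simp add: atMost_atLeast0 sum.atLeast_Suc_atMost)

lemma Nblk_i: "i \<in> {1..d} \<Longrightarrow> Nblk ms d i = {1 + Ps ms (i - 1) .. Ps ms i}"
  unfolding Nblk_def using sum_lessThan_Ps[of i ms] by (simp add: Ps_def)

lemma Nblk_0: "Nblk ms d 0 = {Ps ms d + 1 .. mtot ms d + 1}"
  unfolding Nblk_def by (simp add: mtot_Ps)

lemma Nblk_last: "Nblk ms d (d + 1) = {mtot ms d + 1}"
  unfolding Nblk_def by simp

lemma Nblk_i_sub: "i \<in> {1..d} \<Longrightarrow> Nblk ms d i \<subseteq> {1 .. Ps ms d}"
  using Nblk_i[of i d ms] Ps_mono[of i d ms] by auto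

lemma Nblk_disj: "i \<in> {1..d} \<Longrightarrow> j \<in> {1..d} \<Longrightarrow> i \<noteq> j \<Longrightarrow> Nblk ms d i \<inter> Nblk ms d j = {}"
proof -
  assume ij: "i \<in> {1..d}" "j \<in> {1..d}" "i \<noteq> j"
  have aux: "Nblk ms d a \<inter> Nblk ms d b = {}" if "a \<in> {1..d}" "b \<in> {1..d}" "a < b" for a b
  proof -
    have "Ps ms a \<le> Ps ms (b - 1)" using that by (intro Ps_mono) auto
    then show ?thesis using Nblk_i[OF that(1)] Nblk_i[OF that(2)] by auto
  qed
  show ?thesis
  proof (cases "i < j")
    case True then show ?thesis using aux ij by blast
  next
    case False then have "j < i" using ij by simp
    then show ?thesis using aux ij by blast
  qed
qed

lemma Nblk_0_disj: "i \<in> {1..d} \<Longrightarrow> Nblk ms d i \<inter> Nblk ms d 0 = {}"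
  using Nblk_i_sub[of i d ms] Nblk_0[of ms d] by auto

lemma Ps_cover: "1 \<le> v \<Longrightarrow> v \<le> Ps ms n \<Longrightarrow> \<exists>i\<in>{1..n}. Ps ms (i - 1) < v \<and> v \<le> Ps ms i"
proof (induction n)
  case 0 then show ?case by (simp add: Ps_def)
next
  case (Suc n)
  show ?case
  proof (cases "v \<le> Ps ms n")
    case True then show ?thesis using Suc by force
  next
    case False then show ?thesis using Suc.prems by (intro bexI[of _ "Suc n"]) auto
  qed
qed

lemma N_cover:
  assumes "v \<in> {1..mtot ms d + 1}"
  shows "v \<in> Nblk ms d 0 \<or> (\<exists>i\<in>{1..d}. v \<in> Nblk ms d i)"
proof (cases "v \<le> Ps ms d")
  case True
  then obtain i where i: "i \<in> {1..d}" "Ps ms (i - 1) < v" "v \<le> Ps ms i"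
    using Ps_cover[of v ms d] assms by auto
  then have "v \<in> Nblk ms d i" using Nblk_i[OF i(1), of ms] by simp
  then show ?thesis using i(1) by blast
next
  case False then show ?thesis using Nblk_0[of ms d] assms by auto
qed

lemma Nblk_sub_N: "i \<in> {0..d+1} \<Longrightarrow> Nblk ms d i \<subseteq> {1..mtot ms d + 1}"
proof -
  assume i: "i \<in> {0..d+1}"
  show ?thesis
  proof (cases "i = 0")
    case True then show ?thesis using Nblk_0[of ms d] by auto
  next
    case False
    show ?thesis
    proof (cases "i = d + 1")
      case True then show ?thesis using Nblk_last[of ms d] by auto
    next
      case False
      then have "i \<in> {1..d}" using i \<open>i \<noteq> 0\<close> by auto
      then show ?thesis using Nblk_i_sub[of i d ms] mtot_Ps[of ms d] by auto
    qed
  qed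
qed




lemma cycle_build:
  assumes fct: "funct s T" and xx: "(x, x) \<in> (dedges s t T)\<^sup>+"
  shows "\<exists>es. dcycle s t es \<and> set es \<subseteq> T"
proof -
  obtain y where xy: "(x, y) \<in> dedges s t T" "(y, x) \<in> (dedges s t T)\<^sup>*" using xx by (meson tranclD)
  obtain xs where xs: "xs \<noteq> []" "hd xs = y" "last xs = x" "distinct xs" "chain (dedges s t T) xs"
    using path_of_rtrancl[OF xy(2)] by blast
  define n where "n = length xs"
  have n1: "n \<ge> 1" using xs(1) n_def by (cases xs) auto
  define zs where "zs = x # xs"
  have lzs: "length zs = Suc n" unfolding zs_def n_def by simp
  have czs: "chain (dedges s t T) zs" unfolding zs_def using xs(1,2,5) xy(1)
    by (cases xs) (auto simp: chain_Cons)
  have z0: "zs ! 0 = x" unfolding zs_def by simp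
  have zn: "zs ! n = x" unfolding zs_def n_def using xs(1,3) by (simp add: last_conv_nth)
  define out where "out y = (THE f. f \<in> T \<and> s f = y)" for y
  have out: "out (zs ! i) \<in> T \<and> s (out (zs ! i)) = zs ! i \<and> t (out (zs ! i)) = zs ! Suc i" if i: "i < n" for i
  proof -
    have "(zs ! i, zs ! Suc i) \<in> dedges s t T" using czs i lzs unfolding chain_def by simp
    then obtain f where f: "f \<in> T" "s f = zs ! i" "t f = zs ! Suc i" unfolding dedges_iff by blast
    have "out (zs ! i) = f" unfolding out_def
      using f fct unfolding funct_def by (intro the_equality) auto
    then show ?thesis using f by simp
  qed
  define es where "es = map (\<lambda>i. out (zs ! i)) [0..<n]"
  have les: "length es = n" unfolding es_def by simp
  have esi: "es ! i = out (zs ! i)" if "i < n" for i unfolding es_def using that by simp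
  have esne: "es \<noteq> []" using les n1 by auto
  have sub: "set es \<subseteq> T"
  proof
    fix f assume "f \<in> set es"
    then obtain i where "i < n" "f = es ! i" using les by (metis in_set_conv_nth)
    then show "f \<in> T" using out esi by simp
  qed
  have ms: "map s es = take n zs"
  proof (rule nth_equalityI)
    show "length (map s es) = length (take n zs)" using les lzs by simp
    fix i assume "i < length (map s es)"
    then have i: "i < n" using les by simp
    then show "map s es ! i = take n zs ! i" using out[OF i] esi[OF i] les by simp
  qed
  have "distinct (take n zs)"
  proof -
    have "take n zs = x # take (n - 1) xs" unfolding zs_def using n1 by (cases n) auto
    moreover have "x \<notin> set (take (n - 1) xs)"
    proof
      assume "x \<in> set (take (n - 1) xs)"
      then obtain j where j: "j < n - 1" "xs ! j = x" using n_def by (auto simp: in_set_conv_nth)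
      have "xs ! (n - 1) = x" using xs(1,3) n_def by (simp add: last_conv_nth)
      moreover have "j < length xs" "n - 1 < length xs" using j n1 n_def by auto
      ultimately have "j = n - 1" using j(2) nth_eq_iff_index_eq[OF xs(4), of j "n - 1"] by simp
      then show False using j by simp
    qed
    moreover have "distinct (take (n - 1) xs)" using xs(4) by simp
    ultimately show ?thesis by simp
  qed
  then have dms: "distinct (map s es)" using ms by simp
  have "dcycle s t es"
    unfolding dcycle_def
  proof (intro conjI)
    show "es \<noteq> []" using esne .
    show "\<forall>i. Suc i < length es \<longrightarrow> t (es ! i) = s (es ! Suc i)" using out esi les by simp
    show "t (last es) = s (hd es)"
    proof -
      have "last es = es ! (n - 1)" using les last_conv_nth[OF esne] by simp
      then have "t (last es) = zs ! n" using out[of "n - 1"] esi[of "n - 1"] n1 by simp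
      moreover have "s (hd es) = zs ! 0" using out[of 0] esi[of 0] n1 hd_conv_nth[OF esne] by simp
      ultimately show ?thesis using z0 zn by simp
    qed
    show "distinct (map s es)" using dms .
  qed
  then show ?thesis using sub by blast
qed

definition TP0 :: "('e \<Rightarrow> nat) \<Rightarrow> ('e \<Rightarrow> nat) \<Rightarrow> 'e set \<Rightarrow> nat set \<Rightarrow> nat set \<Rightarrow> 'e set \<Rightarrow> bool" where
  "TP0 s t E N B Z \<longleftrightarrow> Z \<subseteq> E \<and> (\<forall>v\<in>B. \<not> (\<exists>e\<in>Z. s e = v)) \<and> (\<forall>v\<in>N - B. \<exists>e\<in>Z. s e = v)
     \<and> funct s Z \<and> acyclic (dedges s t Z)"

lemma TP_TP0: "TP s t E N F B Z \<Longrightarrow> TP0 s t E N B Z"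
  unfolding TP_def TP0_def by blast

context grFB begin

definition rtZ :: "'e set \<Rightarrow> nat \<Rightarrow> nat" where
  "rtZ Z x = (THE r. r \<in> B \<and> (x, r) \<in> (dedges s t Z)\<^sup>*)"

lemma rt_ex1:
  assumes T: "TP0 s t E N B Z" and x: "x \<in> N"
  shows "\<exists>!r. r \<in> B \<and> (x, r) \<in> (dedges s t Z)\<^sup>*"
proof -
  have ZE: "Z \<subseteq> E" and noB: "\<forall>v\<in>B. \<not> (\<exists>e\<in>Z. s e = v)" and outN: "\<forall>v\<in>N - B. \<exists>e\<in>Z. s e = v"
    and fct: "funct s Z" and acy: "acyclic (dedges s t Z)"
    using T unfolding TP0_def by auto
  have sv: "single_valued (dedges s t Z)" using funct_sv[OF fct] .
  have fin: "finite (dedges s t Z)" using finite_dedges finE ZE finite_subset by blast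
  have sinkB: "\<forall>z. (r, z) \<notin> dedges s t Z" if "r \<in> B" for r
    using noB that no_succ_iff by metis
  obtain w where w: "(x, w) \<in> (dedges s t Z)\<^sup>*" "\<forall>z. (w, z) \<notin> dedges s t Z"
    using reach_sink[OF fin acy] by blast
  have wN: "w \<in> N" using d_in_N[OF w(1) ZE x] .
  have "\<not> (\<exists>e\<in>Z. s e = w)" using w(2) no_succ_iff by metis
  then have wB: "w \<in> B" using outN wN by blast
  have "r = w" if "r \<in> B" "(x, r) \<in> (dedges s t Z)\<^sup>*" for r
    using sink_unique[OF sv that(2) w(1) sinkB[OF that(1)] w(2)] .
  then show ?thesis using wB w(1) by blast
qed

lemma rt_prop: "TP0 s t E N B Z \<Longrightarrow> x \<in> N \<Longrightarrow> rtZ Z x \<in> B \<and> (x, rtZ Z x) \<in> (dedges s t Z)\<^sup>*"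
  unfolding rtZ_def by (rule theI', rule rt_ex1)

lemma rt_eq: "TP0 s t E N B Z \<Longrightarrow> x \<in> N \<Longrightarrow> r \<in> B \<Longrightarrow> (x, r) \<in> (dedges s t Z)\<^sup>* \<Longrightarrow> rtZ Z x = r"
  using rt_ex1 rt_prop by blast

lemma rt_reach:
  assumes T: "TP0 s t E N B Z" and x: "x \<in> N" and xw: "(x, w) \<in> (dedges s t Z)\<^sup>*"
  shows "rtZ Z x = rtZ Z w"
proof -
  have ZE: "Z \<subseteq> E" using T unfolding TP0_def by auto
  have wN: "w \<in> N" using d_in_N[OF xw ZE x] .
  have "(x, rtZ Z w) \<in> (dedges s t Z)\<^sup>*" using rt_prop[OF T wN] xw by (meson rtrancl_trans)
  then show ?thesis using rt_eq[OF T x] rt_prop[OF T wN] by blast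
qed

lemma count:
  assumes T: "TP s t E N F B Z" and cFB: "card F \<le> card B" and finF: "finite F"
    and f: "f1 \<in> F" "f2 \<in> F" "(f1, w) \<in> (dedges s t Z)\<^sup>*" "(f2, w) \<in> (dedges s t Z)\<^sup>*"
  shows "f1 = f2"
proof -
  have T0: "TP0 s t E N B Z" using TP_TP0[OF T] .
  have Fc: "\<forall>r\<in>B. \<exists>f\<in>F. (f, r) \<in> (dedges s t Z)\<^sup>*" using T unfolding TP_def by blast
  have img: "rtZ Z ` F = B"
  proof
    show "rtZ Z ` F \<subseteq> B" using rt_prop[OF T0] FN by blast
    show "B \<subseteq> rtZ Z ` F"
    proof
      fix r assume r: "r \<in> B"
      then obtain f where "f \<in> F" "(f, r) \<in> (dedges s t Z)\<^sup>*" using Fc by blast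
      then have "rtZ Z f = r" using rt_eq[OF T0 _ r] FN by blast
      then show "r \<in> rtZ Z ` F" using \<open>f \<in> F\<close> by blast
    qed
  qed
  have "card (rtZ Z ` F) \<le> card F" using card_image_le[OF finF] .
  then have "card (rtZ Z ` F) = card F" using img cFB by simp
  then have inj: "inj_on (rtZ Z) F" using eq_card_imp_inj_on[OF finF] by blast
  have "rtZ Z f1 = rtZ Z w" "rtZ Z f2 = rtZ Z w" using rt_reach[OF T0] f FN by blast+
  then show ?thesis using inj f(1,2) unfolding inj_on_def by metis
qed

end



lemma TP_Fc: "TP s t E N F B Z \<Longrightarrow> \<forall>r\<in>B. \<exists>f\<in>F. (f, r) \<in> (dedges s t Z)\<^sup>*"
  unfolding TP_def by (elim conjE)

locale setting =
  fixes d :: nat and ms :: "nat \<Rightarrow> nat" and ji :: "nat \<Rightarrow> nat"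
    and E :: "'e set" and s t :: "'e \<Rightarrow> nat" and \<pi> :: "'e \<Rightarrow> 'r::ordered_comm_ring" and \<mu> :: "'e \<Rightarrow> 'e set"
    and k ell :: nat and Bt :: "nat set" and \<zeta> :: "'e set"
  assumes ji_in: "\<forall>i\<in>{1..d}. ji i \<in> Nblk ms d i"
    and fin: "finite E"
    and ends: "\<forall>e\<in>E. s e \<in> {1..mtot ms d + 1} \<and> t e \<in> {1..mtot ms d + 1}"
    and noloop: "\<forall>e\<in>E. s e \<noteq> t e"
    and compat1: "\<forall>e\<in>E. \<forall>i\<in>{0..d}. \<forall>j\<in>{1..d}. i \<noteq> j \<longrightarrow>
                    \<not> (s e \<in> Nblk ms d i \<and> t e \<in> Nblk ms d j)"
    and P: "Pgraph E s t \<pi> \<mu>"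
    and star: "\<forall>l'\<in>{1..mtot ms d}. \<forall>i\<in>{1..d}. \<forall>es.
                 set es \<subseteq> E \<and> dpath s t es (ji i) l' \<and> (\<exists>e\<in>set es. \<pi> e < 0)
                 \<longrightarrow> mtot ms d + 1 \<in> pathnodes s t es"
    and k: "k \<in> {1..d + 1}"
    and Bt: "Bt \<in> odot ({1..d + 1} - {k}) (Nblk ms d)"
    and l: "ell \<in> {1..mtot ms d + 1} - Bt"
    and zeta: "\<zeta> \<in> Lambda E s t \<pi> \<mu> {1..mtot ms d + 1} (ji ` {1..d} \<union> {mtot ms d + 1}) (insert ell Bt)"
begin

abbreviation "m \<equiv> mtot ms d"
abbreviation "NN \<equiv> {1..m + 1}"
abbreviation "FF \<equiv> ji ` {1..d} \<union> {m + 1}"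
abbreviation "BB \<equiv> insert ell Bt"

lemma Bt_repr: "\<exists>g. Bt = g ` ({1..d+1} - {k}) \<and> (\<forall>i\<in>{1..d+1} - {k}. g i \<in> Nblk ms d i)"
  using Bt unfolding odot_def by blast

lemma m1_blk0: "m + 1 \<in> Nblk ms d 0"
  using Nblk_0[of ms d] mtot_Ps[of ms d] by auto

lemma m1_notblk: "i \<in> {1..d} \<Longrightarrow> m + 1 \<notin> Nblk ms d i"
  using Nblk_0_disj[of i d ms] m1_blk0 by blast

lemma blk_disj_all: "i \<in> {1..d+1} \<Longrightarrow> j \<in> {1..d+1} \<Longrightarrow> i \<noteq> j \<Longrightarrow> Nblk ms d i \<inter> Nblk ms d j = {}"
proof -
  assume ij: "i \<in> {1..d+1}" "j \<in> {1..d+1}" "i \<noteq> j"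
  show ?thesis
  proof (cases "i = d + 1")
    case True
    then have "j \<in> {1..d}" using ij by auto
    then show ?thesis using True Nblk_last[of ms d] m1_notblk by auto
  next
    case False
    then have i: "i \<in> {1..d}" using ij by auto
    show ?thesis
    proof (cases "j = d + 1")
      case True then show ?thesis using i Nblk_last[of ms d] m1_notblk by auto
    next
      case False
      then have "j \<in> {1..d}" using ij by auto
      then show ?thesis using Nblk_disj[OF i] ij by blast
    qed
  qed
qed

lemma BN: "BB \<subseteq> NN"
proof -
  obtain g where g: "Bt = g ` ({1..d+1} - {k})" "\<forall>i\<in>{1..d+1} - {k}. g i \<in> Nblk ms d i"
    using Bt_repr by blast
  have "Bt \<subseteq> NN"
  proof
    fix x assume "x \<in> Bt"
    then obtain i where i: "i \<in> {1..d+1} - {k}" "x = g i" using g by blast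
    then have "x \<in> Nblk ms d i" using g by blast
    then show "x \<in> NN" using Nblk_sub_N[of i d ms] i by auto
  qed
  then show ?thesis using l by auto
qed

lemma FN: "FF \<subseteq> NN"
proof -
  have "ji i \<in> NN" if i: "i \<in> {1..d}" for i
  proof -
    have "ji i \<in> Nblk ms d i" using ji_in i by blast
    moreover have "Nblk ms d i \<subseteq> NN" using Nblk_sub_N[of i d ms] i by auto
    ultimately show ?thesis by blast
  qed
  then show ?thesis by auto
qed

lemma finF: "finite FF" by simp

lemma cardF: "card FF \<le> d + 1"
proof -
  have "card FF \<le> card (ji ` {1..d}) + card {m + 1}" by (rule card_Un_le)
  moreover have "card (ji ` {1..d}) \<le> d" using card_image_le[of "{1..d}" ji] by simp
  ultimately show ?thesis by simp
qed

lemma cardB: "card BB = d + 1"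
proof -
  obtain g where g: "Bt = g ` ({1..d+1} - {k})" "\<forall>i\<in>{1..d+1} - {k}. g i \<in> Nblk ms d i"
    using Bt_repr by blast
  have inj: "inj_on g ({1..d+1} - {k})"
  proof (rule inj_onI)
    fix i j assume ij: "i \<in> {1..d+1} - {k}" "j \<in> {1..d+1} - {k}" "g i = g j"
    show "i = j"
    proof (rule ccontr)
      assume "i \<noteq> j"
      then have dj: "Nblk ms d i \<inter> Nblk ms d j = {}" using blk_disj_all ij by blast
      have "g i \<in> Nblk ms d i" "g j \<in> Nblk ms d j" using g(2) ij(1,2) by auto
      then have "g i \<in> Nblk ms d i \<inter> Nblk ms d j" using ij(3) by simp
      then show False using dj by simp
    qed
  qed
  have "card ({1..d+1} - {k}) = d" using k by simp
  then have "card Bt = d" using g(1) card_image[OF inj] by simp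
  moreover have "ell \<notin> Bt" using l by blast
  moreover have "finite Bt" using g(1) by simp
  ultimately show ?thesis by simp
qed

lemma cardFB: "card FF \<le> card BB" using cardF cardB by simp

sublocale grFB s t E NN FF BB
  by unfold_locales (use fin ends noloop BN FN in auto)

lemma K1:
  assumes e: "e \<in> E" and j: "j \<in> {1..d}" and te: "t e \<in> Nblk ms d j"
  shows "s e \<in> Nblk ms d j"
proof (rule ccontr)
  assume ns: "s e \<notin> Nblk ms d j"
  have "s e \<in> NN" using ends e by blast
  then have "s e \<in> Nblk ms d 0 \<or> (\<exists>i\<in>{1..d}. s e \<in> Nblk ms d i)" using N_cover by blast
  then obtain i where i: "i \<in> {0..d}" "s e \<in> Nblk ms d i" by force
  then have "i \<noteq> j" using ns by blast
  then show False using compat1 e i j te by blast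
qed

lemma K2:
  assumes e: "e \<in> E" and se: "s e \<in> Nblk ms d 0"
  shows "t e \<in> Nblk ms d 0"
proof (rule ccontr)
  assume nt: "t e \<notin> Nblk ms d 0"
  have "t e \<in> NN" using ends e by blast
  then obtain j where j: "j \<in> {1..d}" "t e \<in> Nblk ms d j" using N_cover nt by blast
  then have "s e \<in> Nblk ms d j" using K1 e by blast
  then show False using Nblk_0_disj[OF j(1)] se by blast
qed

lemma walk_in:
  assumes TE: "T \<subseteq> E" and uw: "(u, w) \<in> (dedges s t T)\<^sup>*" and j: "j \<in> {1..d}" and w: "w \<in> Nblk ms d j"
  shows "u \<in> Nblk ms d j"
  using uw w
proof (induction rule: converse_rtrancl_induct)
  case base then show ?case .
next
  case (step y z)
  then obtain e where "e \<in> T" "s e = y" "t e = z" unfolding dedges_iff by blast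
  then show ?case using K1[of e j] TE j step by blast
qed

lemma walk0:
  assumes TE: "T \<subseteq> E" and uw: "(u, w) \<in> (dedges s t T)\<^sup>*" and u: "u \<in> Nblk ms d 0"
  shows "w \<in> Nblk ms d 0"
  using uw u
proof (induction rule: rtrancl_induct)
  case base then show ?case .
next
  case (step y z)
  then obtain e where "e \<in> T" "s e = y" "t e = z" unfolding dedges_iff by blast
  then show ?case using K2[of e] TE step by blast
qed

lemma B0:
  assumes "m + 1 \<notin> BB"
  shows "BB \<inter> Nblk ms d 0 \<subseteq> {ell}"
proof -
  obtain g where g: "Bt = g ` ({1..d+1} - {k})" "\<forall>i\<in>{1..d+1} - {k}. g i \<in> Nblk ms d i"
    using Bt_repr by blast
  have kd: "k = d + 1"
  proof (rule ccontr)
    assume "k \<noteq> d + 1"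
    then have "d + 1 \<in> {1..d+1} - {k}" by simp
    then have "g (d+1) \<in> Bt" "g (d + 1) \<in> Nblk ms d (d+1)" using g by auto
    then show False using assms Nblk_last[of ms d] by auto
  qed
  have "Bt \<inter> Nblk ms d 0 = {}"
  proof (rule ccontr)
    assume "Bt \<inter> Nblk ms d 0 \<noteq> {}"
    then obtain i where i: "i \<in> {1..d+1} - {k}" "g i \<in> Nblk ms d 0" using g by blast
    then have "i \<in> {1..d}" using kd by auto
    then show False using Nblk_0_disj[of i d ms] i g by blast
  qed
  then show ?thesis by auto
qed

lemma L3:
  assumes T: "TP0 s t E NN BB T" and nb: "m + 1 \<notin> BB" and r: "r \<in> BB" "r \<in> Nblk ms d 0"
  shows "(m + 1, r) \<in> (dedges s t T)\<^sup>*"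
proof -
  have TE: "T \<subseteq> E" using T unfolding TP0_def by blast
  have mN: "m + 1 \<in> NN" by simp
  have rp: "rtZ T (m+1) \<in> BB" "(m + 1, rtZ T (m+1)) \<in> (dedges s t T)\<^sup>*" using rt_prop[OF T mN] by auto
  then have "rtZ T (m+1) \<in> Nblk ms d 0" using walk0[OF TE _ m1_blk0] by blast
  then have "rtZ T (m+1) = ell" "r = ell" using B0[OF nb] rp r by auto
  then show ?thesis using rp by simp
qed

lemma L4:
  assumes T: "TP0 s t E NN BB T" and r: "r \<in> BB" "r \<noteq> m + 1" and c: "\<not> (m + 1 \<notin> BB \<and> r \<in> Nblk ms d 0)"
  shows "(m + 1, r) \<notin> (dedges s t T)\<^sup>*"
proof
  assume mr: "(m + 1, r) \<in> (dedges s t T)\<^sup>*"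
  have TE: "T \<subseteq> E" and noB: "\<forall>v\<in>BB. \<not> (\<exists>e\<in>T. s e = v)" using T unfolding TP0_def by auto
  show False
  proof (cases "m + 1 \<in> BB")
    case True
    have "(m + 1, r) \<in> (dedges s t T)\<^sup>+" using mr r(2) rtrancl_eq_or_trancl by metis
    then obtain y where "(m + 1, y) \<in> dedges s t T" using tranclD by metis
    then show False using noB True unfolding dedges_iff by blast
  next
    case False
    then have "r \<notin> Nblk ms d 0" using c by blast
    moreover have "r \<in> NN" using r BN by blast
    ultimately obtain j where j: "j \<in> {1..d}" "r \<in> Nblk ms d j" using N_cover by blast
    then have "m + 1 \<in> Nblk ms d j" using walk_in[OF TE mr] by blast
    then show False using m1_notblk j by blast
  qed
qed

lemma L4':
  assumes T: "TP s t E NN FF BB T" and r: "r \<in> BB" "r \<noteq> m + 1" and c: "\<not> (m + 1 \<notin> BB \<and> r \<in> Nblk ms d 0)"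
  shows "\<exists>i\<in>{1..d}. (ji i, r) \<in> (dedges s t T)\<^sup>*"
proof -
  obtain f where f: "f \<in> FF" "(f, r) \<in> (dedges s t T)\<^sup>*" using TP_Fc[OF T] r by blast
  have "f \<noteq> m + 1" using L4[OF TP_TP0[OF T] r c] f by blast
  then obtain i where "i \<in> {1..d}" "f = ji i" using f by blast
  then show ?thesis using f by blast
qed

lemma L5:
  assumes fct: "funct s T" and acy: "acyclic (dedges s t T)" and TE: "T \<subseteq> E"
    and i: "i \<in> {1..d}" and p: "(ji i, v) \<in> (dedges s t T)\<^sup>*" and e: "e \<in> T" "s e = v" "\<pi> e < 0"
  shows "(ji i, m + 1) \<in> (dedges s t T)\<^sup>* \<and> (m + 1, t e) \<in> (dedges s t T)\<^sup>*"
proof -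
  obtain es where es: "set es \<subseteq> T" "dpath s t es (ji i) (t e)" "e \<in> set es"
    "\<forall>y\<in>pathnodes s t es. (ji i, y) \<in> (dedges s t T)\<^sup>* \<and> (y, t e) \<in> (dedges s t T)\<^sup>*"
    using dpath_build[OF fct acy p e(1,2)] by blast
  have "m + 1 \<in> pathnodes s t es"
  proof (cases "t e \<le> m")
    case True
    have "t e \<in> {1..m}" using True ends e TE by auto
    moreover have "set es \<subseteq> E" using es(1) TE by blast
    ultimately show ?thesis using star i es(2,3) e(3) by blast
  next
    case False
    then have "t e = m + 1" using ends e TE by force
    moreover have "t (last es) = t e" "es \<noteq> []" using es(2) unfolding dpath_def by auto
    ultimately show ?thesis unfolding pathnodes_def by (metis last_in_set list.set_map UnI2 imageI)
  qed
  then show ?thesis using es(4) by blast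
qed

end



context setting begin

abbreviation "En \<equiv> Eneg E \<pi>"
abbreviation "Ep \<equiv> Epos E \<pi>"
abbreviation "mst \<equiv> mustar E \<pi> \<mu>"

lemma E_split: "E = Ep \<union> En"
  using P unfolding Pgraph_def by (elim conjE)

lemma one_neg: "dcycle s t es \<Longrightarrow> set es \<subseteq> E \<Longrightarrow> card (set es \<inter> En) \<le> 1"
proof -
  assume a: "dcycle s t es" "set es \<subseteq> E"
  have "\<forall>es. dcycle s t es \<and> set es \<subseteq> E \<longrightarrow> card (set es \<inter> En) \<le> 1"
    using P unfolding Pgraph_def by (elim conjE)
  then show ?thesis using a by blast
qed

lemma Pmu: "\<forall>e\<in>En. \<mu> e \<subseteq> Ep \<and>
        (\<forall>e'\<in>\<mu> e. s e' = s e) \<and>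
        (\<forall>e'\<in>\<mu> e. \<forall>es. dcycle s t es \<and> set es \<subseteq> E \<and> e' \<in> set es
                      \<longrightarrow> t e \<in> set (map s es)) \<and>
        (\<forall>e2\<in>En. e \<noteq> e2 \<longrightarrow> \<mu> e \<inter> \<mu> e2 = {}) \<and>
        \<pi> e + (\<Sum>e'\<in>\<mu> e. \<pi> e') \<ge> 0"
  using P unfolding Pgraph_def by (elim conjE)

lemma mu_pos: "e \<in> En \<Longrightarrow> \<mu> e \<subseteq> Ep"
  using Pmu by blast

lemma mu_src: "e \<in> En \<Longrightarrow> g \<in> \<mu> e \<Longrightarrow> s g = s e"
proof -
  assume a: "e \<in> En" "g \<in> \<mu> e"
  have "\<forall>e'\<in>\<mu> e. s e' = s e" using bspec[OF Pmu a(1)] by (elim conjE)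
  then show ?thesis using a(2) by blast
qed

lemma mu_cyc: "e \<in> En \<Longrightarrow> g \<in> \<mu> e \<Longrightarrow> dcycle s t es \<Longrightarrow> set es \<subseteq> E \<Longrightarrow> g \<in> set es \<Longrightarrow> t e \<in> set (map s es)"
proof -
  assume a: "e \<in> En" "g \<in> \<mu> e" "dcycle s t es" "set es \<subseteq> E" "g \<in> set es"
  have "\<forall>e'\<in>\<mu> e. \<forall>es. dcycle s t es \<and> set es \<subseteq> E \<and> e' \<in> set es \<longrightarrow> t e \<in> set (map s es)"
    using bspec[OF Pmu a(1)] by (elim conjE)
  then show ?thesis using a(2-5) by blast
qed

lemma mu_disj: "e1 \<in> En \<Longrightarrow> e2 \<in> En \<Longrightarrow> e1 \<noteq> e2 \<Longrightarrow> \<mu> e1 \<inter> \<mu> e2 = {}"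
proof -
  assume a: "e1 \<in> En" "e2 \<in> En" "e1 \<noteq> e2"
  have "\<forall>e2\<in>En. e1 \<noteq> e2 \<longrightarrow> \<mu> e1 \<inter> \<mu> e2 = {}" using bspec[OF Pmu a(1)] by (elim conjE)
  then show ?thesis using a(2,3) by blast
qed

lemma pn_disj: "e \<in> Ep \<Longrightarrow> e \<notin> En"
  unfolding Epos_def Eneg_def by auto

lemma En_E: "En \<subseteq> E" unfolding Eneg_def by auto
lemma Ep_E: "Ep \<subseteq> E" unfolding Epos_def by auto

lemma mst_eq: "e \<in> En \<Longrightarrow> g \<in> \<mu> e \<Longrightarrow> mst g = e"
  unfolding mustar_def
proof (rule the_equality)
  assume a: "e \<in> En" "g \<in> \<mu> e"
  show "e \<in> En \<and> g \<in> \<mu> e" using a by simp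
  fix e' assume "e' \<in> En \<and> g \<in> \<mu> e'"
  then show "e' = e" using mu_disj[of e' e] a by blast
qed

lemma mst_prop: "g \<in> immu E \<pi> \<mu> \<Longrightarrow> mst g \<in> En \<and> g \<in> \<mu> (mst g)"
proof -
  assume "g \<in> immu E \<pi> \<mu>"
  then obtain e where e: "e \<in> En" "g \<in> \<mu> e" unfolding immu_def by blast
  then show ?thesis using mst_eq by simp
qed

lemma immu_pos: "g \<in> immu E \<pi> \<mu> \<Longrightarrow> g \<in> Ep"
  using mst_prop mu_pos by blast

lemma mst_src: "g \<in> immu E \<pi> \<mu> \<Longrightarrow> s (mst g) = s g"
  using mst_prop mu_src by metis

lemma zeta_Theta: "\<zeta> \<in> Theta E s t NN FF BB"
  using zeta unfolding Lambda_def by blast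

lemma zeta_fam: "EFfam E s t \<pi> \<mu> NN FF BB \<zeta> = {{}}"
  using zeta unfolding Lambda_def by blast

lemma zeta_TP: "TP s t E NN FF BB \<zeta>" using Theta_TP[OF zeta_Theta] .

lemma TP_p1: "TP s t E NN FF BB Z \<Longrightarrow> Z \<subseteq> E"
  unfolding TP_def by (elim conjE)

lemma TP_p2: "TP s t E NN FF BB Z \<Longrightarrow> \<forall>v\<in>BB. \<not> (\<exists>e\<in>Z. s e = v)"
  unfolding TP_def by (elim conjE)

lemma TP_p3: "TP s t E NN FF BB Z \<Longrightarrow> \<forall>v\<in>NN - BB. \<exists>e\<in>Z. s e = v"
  unfolding TP_def by (elim conjE)

lemma TP_p4: "TP s t E NN FF BB Z \<Longrightarrow> funct s Z"
  unfolding TP_def by (elim conjE)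

lemma TP_p5: "TP s t E NN FF BB Z \<Longrightarrow> acyclic (dedges s t Z)"
  unfolding TP_def by (elim conjE)

lemma TP_p6: "TP s t E NN FF BB Z \<Longrightarrow> \<forall>r\<in>BB. \<exists>f\<in>FF. (f, r) \<in> (dedges s t Z)\<^sup>*"
  unfolding TP_def by (elim conjE)

lemmas TP_parts = TP_p1 TP_p2 TP_p3 TP_p4 TP_p5 TP_p6

lemma partA:
  assumes Z: "Z \<in> Theta E s t NN FF BB" and psi: "psiF E s t \<pi> \<mu> NN FF BB Z = \<zeta>"
  shows "\<exists>X. Z = X \<union> (\<zeta> \<inter> Ep) \<and> X \<in> odot (\<zeta> \<inter> En) (\<lambda>e. insert e (\<mu> e))"
proof -
  have TZ: "TP s t E NN FF BB Z" using Theta_TP[OF Z] .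
  have fct: "funct s Z" using TP_p4[OF TZ] .
  define M where "M = EFmax E s t \<pi> \<mu> NN FF BB Z"
  have MZ: "M \<subseteq> Z \<inter> immu E \<pi> \<mu>" unfolding M_def EFmax_def EFfam_def by blast
  have zeta_eq: "\<zeta> = (Z - M) \<union> mst ` M" using psi unfolding psiF_def M_def by simp
  have uniq: "g1 = g2" if "g1 \<in> M" "g2 \<in> M" "mst g1 = mst g2" for g1 g2
  proof -
    have "s g1 = s g2" using mst_src that MZ by (metis IntE subsetD)
    then show ?thesis using fct that MZ unfolding funct_def by blast
  qed
  define fch where "fch e = (if \<exists>g\<in>M. mst g = e then (THE g. g \<in> M \<and> mst g = e) else e)" for e
  have fch1: "fch e \<in> M \<and> mst (fch e) = e" if ex: "\<exists>g\<in>M. mst g = e" for e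
  proof -
    obtain g where g: "g \<in> M" "mst g = e" using ex by blast
    have "(THE g. g \<in> M \<and> mst g = e) = g" using g uniq by blast
    then show ?thesis using g ex unfolding fch_def by simp
  qed
  have fch2: "fch e = e" if "\<not> (\<exists>g\<in>M. mst g = e)" for e
    using that unfolding fch_def by simp
  define X where "X = fch ` (\<zeta> \<inter> En)"
  have odot: "X \<in> odot (\<zeta> \<inter> En) (\<lambda>e. insert e (\<mu> e))"
    unfolding odot_def X_def
  proof (intro CollectI exI conjI)
    show "\<forall>e\<in>\<zeta> \<inter> En. fch e \<in> insert e (\<mu> e)"
    proof
      fix e assume "e \<in> \<zeta> \<inter> En"
      show "fch e \<in> insert e (\<mu> e)"
      proof (cases "\<exists>g\<in>M. mst g = e")
        case True
        then have a: "fch e \<in> M" "mst (fch e) = e" using fch1 by auto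
        then have "fch e \<in> immu E \<pi> \<mu>" using MZ by blast
        then have "fch e \<in> \<mu> (mst (fch e))" using mst_prop by blast
        then show ?thesis using a(2) by simp
      next
        case False then show ?thesis using fch2 by simp
      qed
    qed
  qed simp
  have sign: "mst ` M \<subseteq> En"
  proof
    fix x assume "x \<in> mst ` M"
    then obtain g where g: "g \<in> M" "x = mst g" by blast
    then have "g \<in> immu E \<pi> \<mu>" using MZ by blast
    then show "x \<in> En" using mst_prop g(2) by blast
  qed
  have "Z = X \<union> (\<zeta> \<inter> Ep)"
  proof
    show "Z \<subseteq> X \<union> (\<zeta> \<inter> Ep)"
    proof
      fix z assume z: "z \<in> Z"
      show "z \<in> X \<union> (\<zeta> \<inter> Ep)"
      proof (cases "z \<in> M")
        case True
        then have "mst z \<in> \<zeta>" "mst z \<in> En" using zeta_eq sign by auto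
        moreover have "fch (mst z) = z" using fch1[of "mst z"] True uniq by blast
        ultimately show ?thesis unfolding X_def by (metis IntI UnI1 imageI)
      next
        case False
        then have zz: "z \<in> \<zeta>" using z zeta_eq by blast
        have "z \<in> E" using z TP_p1[OF TZ] by blast
        then have "z \<in> Ep \<or> z \<in> En" using E_split by blast
        then show ?thesis
        proof
          assume "z \<in> Ep" then show ?thesis using zz by blast
        next
          assume zn: "z \<in> En"
          have "\<not> (\<exists>g\<in>M. mst g = z)"
          proof
            assume "\<exists>g\<in>M. mst g = z"
            then obtain g where g: "g \<in> M" "mst g = z" by blast
            then have "s g = s z" using mst_src MZ by (metis IntE subsetD)
            then have "g = z" using fct g(1) MZ z unfolding funct_def by blast
            then show False using g(1) False by simp
          qed
          then have "fch z = z" using fch2 by simp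
          then show ?thesis unfolding X_def using zz zn by (metis IntI UnI1 imageI)
        qed
      qed
    qed
    show "X \<union> (\<zeta> \<inter> Ep) \<subseteq> Z"
    proof
      fix x assume "x \<in> X \<union> (\<zeta> \<inter> Ep)"
      then show "x \<in> Z"
      proof
        assume "x \<in> X"
        then obtain e where e: "e \<in> \<zeta> \<inter> En" "x = fch e" unfolding X_def by blast
        show "x \<in> Z"
        proof (cases "\<exists>g\<in>M. mst g = e")
          case True then show ?thesis using fch1 e MZ by blast
        next
          case False
          then have "x = e" "e \<notin> mst ` M" using fch2 e by auto
          then show ?thesis using e zeta_eq by blast
        qed
      next
        assume x: "x \<in> \<zeta> \<inter> Ep"
        then have "x \<notin> mst ` M" using sign pn_disj by blast
        then show "x \<in> Z" using x zeta_eq by blast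
      qed
    qed
  qed
  then show ?thesis using odot by blast
qed

end



locale setB = setting +
  fixes fc
  assumes fch: "\<forall>e\<in>\<zeta> \<inter> Eneg E \<pi>. fc e \<in> insert e (\<mu> e)"
begin

definition "S = {e \<in> \<zeta> \<inter> En. fc e \<noteq> e}"
definition "M0 = fc ` S"
definition "Z = fc ` (\<zeta> \<inter> En) \<union> (\<zeta> \<inter> Ep)"

lemma zE: "\<zeta> \<subseteq> E" using TP_p1[OF zeta_TP] .
lemma zfct: "funct s \<zeta>" using TP_p4[OF zeta_TP] .
lemma zacy: "acyclic (dedges s t \<zeta>)" using TP_p5[OF zeta_TP] .
lemma znoB: "\<forall>v\<in>BB. \<not> (\<exists>e\<in>\<zeta>. s e = v)" using TP_p2[OF zeta_TP] .
lemma zout: "\<forall>v\<in>NN - BB. \<exists>e\<in>\<zeta>. s e = v" using TP_p3[OF zeta_TP] .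
lemma zfin: "finite (dedges s t \<zeta>)" using finite_dedges[of \<zeta>] zE fin finite_subset by blast

lemma S_sub: "S \<subseteq> \<zeta> \<inter> En" unfolding S_def by blast

lemma S_facts:
  assumes e: "e \<in> S"
  shows "fc e \<in> \<mu> e" "fc e \<in> Ep" "fc e \<in> E" "s (fc e) = s e" "mst (fc e) = e"
    "fc e \<in> immu E \<pi> \<mu>" "fc e \<notin> \<zeta>"
proof -
  have e1: "e \<in> \<zeta>" "e \<in> En" "fc e \<noteq> e" using e unfolding S_def by auto
  show m: "fc e \<in> \<mu> e" using fch e1 by blast
  show p: "fc e \<in> Ep" using mu_pos[OF e1(2)] m by blast
  show "fc e \<in> E" using p Ep_E by blast
  show sr: "s (fc e) = s e" using mu_src[OF e1(2) m] .
  show "mst (fc e) = e" using mst_eq[OF e1(2) m] .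
  show "fc e \<in> immu E \<pi> \<mu>" unfolding immu_def using e1(2) m by blast
  show "fc e \<notin> \<zeta>"
  proof
    assume "fc e \<in> \<zeta>"
    then have "fc e = e" using zfct e1(1) sr unfolding funct_def by blast
    then show False using e1(3) by simp
  qed
qed

lemma Z_eq: "Z = (\<zeta> - S) \<union> M0"
proof
  show "Z \<subseteq> (\<zeta> - S) \<union> M0"
  proof
    fix z assume "z \<in> Z"
    then have "z \<in> fc ` (\<zeta> \<inter> En) \<or> z \<in> \<zeta> \<inter> Ep" unfolding Z_def by blast
    then show "z \<in> (\<zeta> - S) \<union> M0"
    proof
      assume "z \<in> fc ` (\<zeta> \<inter> En)"
      then obtain e where e: "e \<in> \<zeta> \<inter> En" "z = fc e" by blast
      show ?thesis
      proof (cases "e \<in> S")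
        case True then show ?thesis unfolding M0_def using e by blast
      next
        case False
        then have "fc e = e" using e unfolding S_def by blast
        then show ?thesis using e False by auto
      qed
    next
      assume z: "z \<in> \<zeta> \<inter> Ep"
      then have "z \<notin> S" using S_sub pn_disj by blast
      then show ?thesis using z by blast
    qed
  qed
  show "(\<zeta> - S) \<union> M0 \<subseteq> Z"
  proof
    fix y assume "y \<in> (\<zeta> - S) \<union> M0"
    then show "y \<in> Z"
    proof
      assume y: "y \<in> \<zeta> - S"
      then have "y \<in> E" using zE by blast
      then have "y \<in> Ep \<or> y \<in> En" using E_split by blast
      then show ?thesis
      proof
        assume "y \<in> Ep" then show ?thesis unfolding Z_def using y by blast
      next
        assume yn: "y \<in> En"
        then have "fc y = y" using y unfolding S_def by blast
        then have "y \<in> fc ` (\<zeta> \<inter> En)" using y yn by (metis DiffD1 IntI imageI)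
        then show ?thesis unfolding Z_def by blast
      qed
    next
      assume "y \<in> M0"
      then show ?thesis unfolding M0_def Z_def using S_sub by blast
    qed
  qed
qed

lemma M0_disj: "M0 \<inter> \<zeta> = {}"
  unfolding M0_def using S_facts(7) by blast

lemma M0_mst: "mst ` M0 = S"
proof
  show "mst ` M0 \<subseteq> S" unfolding M0_def using S_facts(5) by auto
  show "S \<subseteq> mst ` M0"
  proof
    fix e assume "e \<in> S"
    then have "mst (fc e) = e" "fc e \<in> M0" using S_facts(5) unfolding M0_def by auto
    then show "e \<in> mst ` M0" by (metis imageI)
  qed
qed

lemma Z_src: "(\<exists>z\<in>Z. s z = v) \<longleftrightarrow> (\<exists>y\<in>\<zeta>. s y = v)"
proof
  assume "\<exists>z\<in>Z. s z = v"
  then obtain z where z: "z \<in> Z" "s z = v" by blast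
  then have "z \<in> \<zeta> - S \<or> z \<in> M0" using Z_eq by blast
  then show "\<exists>y\<in>\<zeta>. s y = v"
  proof
    assume "z \<in> \<zeta> - S" then show ?thesis using z by blast
  next
    assume "z \<in> M0"
    then obtain e where e: "e \<in> S" "z = fc e" unfolding M0_def by blast
    then have "s e = v" using S_facts(4)[OF e(1)] z(2) by simp
    moreover have "e \<in> \<zeta>" using e(1) S_sub by blast
    ultimately show ?thesis by blast
  qed
next
  assume "\<exists>y\<in>\<zeta>. s y = v"
  then obtain y where y: "y \<in> \<zeta>" "s y = v" by blast
  show "\<exists>z\<in>Z. s z = v"
  proof (cases "y \<in> S")
    case True
    then have "fc y \<in> Z" "s (fc y) = v" using S_facts(4) y Z_eq unfolding M0_def by auto
    then show ?thesis by blast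
  next
    case False then show ?thesis using y Z_eq by blast
  qed
qed

lemma Z_E: "Z \<subseteq> E"
  using Z_eq zE S_facts(3) unfolding M0_def by blast

lemma Z_fct: "funct s Z"
  unfolding funct_def
proof (intro ballI impI)
  fix z1 z2 assume z: "z1 \<in> Z" "z2 \<in> Z" "s z1 = s z2"
  have c: "z \<in> \<zeta> - S \<or> (\<exists>e\<in>S. z = fc e)" if "z \<in> Z" for z
    using that Z_eq unfolding M0_def by blast
  show "z1 = z2"
  proof (cases "z1 \<in> \<zeta> - S")
    case True
    show ?thesis
    proof (cases "z2 \<in> \<zeta> - S")
      case True
      then show ?thesis using \<open>z1 \<in> \<zeta> - S\<close> zfct z(3) unfolding funct_def by blast
    next
      case False
      then obtain e where e: "e \<in> S" "z2 = fc e" using c z(2) by blast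
      then have "s e = s z1" using S_facts(4) z(3) by simp
      then have "e = z1" using zfct e(1) S_sub True unfolding funct_def by blast
      then show ?thesis using True e by blast
    qed
  next
    case False
    then obtain e1 where e1: "e1 \<in> S" "z1 = fc e1" using c z(1) by blast
    show ?thesis
    proof (cases "z2 \<in> \<zeta> - S")
      case True
      have "s e1 = s z2" using S_facts(4)[OF e1(1)] e1(2) z(3) by simp
      then have "e1 = z2" using zfct e1(1) S_sub True unfolding funct_def by blast
      then show ?thesis using True e1 by blast
    next
      case False
      then obtain e2 where e2: "e2 \<in> S" "z2 = fc e2" using c z(2) by blast
      have "s e1 = s e2" using S_facts(4)[OF e1(1)] S_facts(4)[OF e2(1)] e1(2) e2(2) z(3) by simp
      then have "e1 = e2" using zfct e1(1) e2(1) S_sub unfolding funct_def by blast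
      then show ?thesis using e1 e2 by simp
    qed
  qed
qed

lemma Z_acy: "acyclic (dedges s t Z)"
proof (rule acyclicI, rule allI, rule notI)
  fix x assume "(x, x) \<in> (dedges s t Z)\<^sup>+"
  then obtain es where es: "dcycle s t es" "set es \<subseteq> Z" using cycle_build[OF Z_fct] by blast
  have esE: "set es \<subseteq> E" using es(2) Z_E by blast
  define V where "V = set (map s es)"
  have ne: "es \<noteq> []" using es(1) unfolding dcycle_def by simp
  have c: "z \<in> \<zeta> - S \<or> (\<exists>e\<in>S. z = fc e)" if "z \<in> Z" for z
    using that Z_eq unfolding M0_def by blast
  show False
  proof (rule closed_no_sink[OF zfin zacy])
    show "s (hd es) \<in> V" unfolding V_def using ne by simp
    show "\<forall>v\<in>V. \<exists>w. (v, w) \<in> dedges s t \<zeta>"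
    proof
      fix v assume "v \<in> V"
      then obtain z where z: "z \<in> set es" "s z = v" unfolding V_def by auto
      then have "z \<in> Z" using es(2) by blast
      then have "z \<in> \<zeta> - S \<or> (\<exists>e\<in>S. z = fc e)" using c by blast
      then show "\<exists>w. (v, w) \<in> dedges s t \<zeta>"
      proof
        assume "z \<in> \<zeta> - S" then show ?thesis using z(2) unfolding dedges_iff by blast
      next
        assume "\<exists>e\<in>S. z = fc e"
        then obtain e where e: "e \<in> S" "z = fc e" by blast
        then have "e \<in> \<zeta>" "s e = v" using S_sub S_facts(4) z(2) by auto
        then show ?thesis unfolding dedges_iff by blast
      qed
    qed
    show "\<forall>v\<in>V. \<forall>w. (v, w) \<in> dedges s t \<zeta> \<longrightarrow> w \<in> V"
    proof (intro ballI allI impI)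
      fix v w assume v: "v \<in> V" and vw: "(v, w) \<in> dedges s t \<zeta>"
      obtain y where y: "y \<in> \<zeta>" "s y = v" "t y = w" using vw unfolding dedges_iff by blast
      obtain z where z: "z \<in> set es" "s z = v" using v unfolding V_def by auto
      then have "z \<in> Z" using es(2) by blast
      then have "z \<in> \<zeta> - S \<or> (\<exists>e\<in>S. z = fc e)" using c by blast
      then show "w \<in> V"
      proof
        assume "z \<in> \<zeta> - S"
        then have "y = z" using zfct y z(2) unfolding funct_def by blast
        then show ?thesis using dcycle_targets[OF es(1) z(1)] y(3) unfolding V_def by simp
      next
        assume "\<exists>e\<in>S. z = fc e"
        then obtain e where e: "e \<in> S" "z = fc e" by blast
        have eZ: "e \<in> \<zeta>" "e \<in> En" using e(1) S_sub by auto
        have "s e = v" using S_facts(4)[OF e(1)] e(2) z(2) by simp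
        then have "y = e" using zfct y eZ(1) unfolding funct_def by blast
        moreover have "t e \<in> set (map s es)"
          using mu_cyc[OF eZ(2) S_facts(1)[OF e(1)] es(1) esE] z(1) e(2) by blast
        ultimately show ?thesis using y(3) unfolding V_def by simp
      qed
    qed
  qed
qed

lemma Z_TP0: "TP0 s t E NN BB Z"
  unfolding TP0_def using Z_E Z_fct Z_acy znoB zout Z_src by blast

lemma no_S_on_path:
  assumes r: "r \<in> BB" "r \<noteq> m + 1" "\<not> (m + 1 \<notin> BB \<and> r \<in> Nblk ms d 0)"
    and i: "i \<in> {1..d}" and p: "(ji i, v) \<in> (dedges s t \<zeta>)\<^sup>*" and vr: "(v, r) \<in> (dedges s t \<zeta>)\<^sup>*"
    and e: "e \<in> S" "s e = v"
  shows False
proof -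
  have eZ: "e \<in> \<zeta>" "e \<in> En" using e(1) S_sub by auto
  then have neg: "\<pi> e < 0" unfolding Eneg_def by simp
  have m1: "(m + 1, t e) \<in> (dedges s t \<zeta>)\<^sup>*" using L5[OF zfct zacy zE i p eZ(1) e(2) neg] by blast
  have "v \<noteq> r" using znoB r(1) eZ(1) e(2) by blast
  then have "(v, r) \<in> (dedges s t \<zeta>)\<^sup>+" using vr rtrancl_eq_or_trancl by metis
  then obtain y where y: "(v, y) \<in> dedges s t \<zeta>" "(y, r) \<in> (dedges s t \<zeta>)\<^sup>*" using tranclD by metis
  have "(v, t e) \<in> dedges s t \<zeta>" using eZ(1) e(2) unfolding dedges_iff by blast
  then have "y = t e" using y(1) single_valuedD[OF funct_sv[OF zfct]] by blast
  then have "(m + 1, r) \<in> (dedges s t \<zeta>)\<^sup>*" using m1 y(2) by simp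
  then show False using L4[OF TP_TP0[OF zeta_TP] r] by blast
qed

lemma Z_Fc: "\<forall>r\<in>BB. \<exists>f\<in>FF. (f, r) \<in> (dedges s t Z)\<^sup>*"
proof
  fix r assume rB: "r \<in> BB"
  show "\<exists>f\<in>FF. (f, r) \<in> (dedges s t Z)\<^sup>*"
  proof (cases "r = m + 1")
    case True then show ?thesis by blast
  next
    case rm: False
    show ?thesis
    proof (cases "m + 1 \<notin> BB \<and> r \<in> Nblk ms d 0")
      case True
      then show ?thesis using L3[OF Z_TP0] rB by blast
    next
      case c: False
      obtain i where i: "i \<in> {1..d}" "(ji i, r) \<in> (dedges s t \<zeta>)\<^sup>*" using L4'[OF zeta_TP rB rm c] by blast
      let ?R = "{p \<in> dedges s t \<zeta>. fst p \<notin> s ` S}"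
      have "(ji i, r) \<in> ?R\<^sup>* \<or> (\<exists>v\<in>s ` S. (ji i, v) \<in> ?R\<^sup>* \<and> (v, r) \<in> (dedges s t \<zeta>)\<^sup>*)"
        using avoid_first[OF i(2)] .
      then show ?thesis
      proof
        assume a: "(ji i, r) \<in> ?R\<^sup>*"
        have "?R \<subseteq> dedges s t Z"
        proof
          fix p assume "p \<in> ?R"
          then obtain y where y: "y \<in> \<zeta>" "p = (s y, t y)" "s y \<notin> s ` S" unfolding dedges_def by auto
          then have "y \<in> Z" using Z_eq by blast
          then show "p \<in> dedges s t Z" using y(2) unfolding dedges_def by blast
        qed
        then have "(ji i, r) \<in> (dedges s t Z)\<^sup>*" using a rtrancl_mono by blast
        then show ?thesis using i(1) by blast
      next
        assume "\<exists>v\<in>s ` S. (ji i, v) \<in> ?R\<^sup>* \<and> (v, r) \<in> (dedges s t \<zeta>)\<^sup>*"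
        then obtain e where e: "e \<in> S" "(ji i, s e) \<in> ?R\<^sup>*" "(s e, r) \<in> (dedges s t \<zeta>)\<^sup>*" by blast
        have "?R \<subseteq> dedges s t \<zeta>" by blast
        then have "(ji i, s e) \<in> (dedges s t \<zeta>)\<^sup>*" using e(2) rtrancl_mono by blast
        then show ?thesis using no_S_on_path[OF rB rm c i(1) _ e(3) e(1)] by blast
      qed
    qed
  qed
qed

lemma Z_TP: "TP s t E NN FF BB Z"
  using Z_TP0 Z_Fc unfolding TP0_def TP_def by blast

end



context setB begin

lemma Z_Theta: "Z \<in> Theta E s t NN FF BB" using TP_Theta[OF Z_TP] .

lemma M0_fam: "M0 \<in> EFfam E s t \<pi> \<mu> NN FF BB Z"
proof -
  have "M0 \<subseteq> Z \<inter> immu E \<pi> \<mu>" using Z_eq S_facts(6) unfolding M0_def by blast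
  moreover have "(Z - M0) \<union> mst ` M0 = \<zeta>"
  proof -
    have "Z - M0 = \<zeta> - S" using Z_eq M0_disj by blast
    then show ?thesis using M0_mst S_sub by blast
  qed
  ultimately show ?thesis unfolding EFfam_def using zeta_Theta by simp
qed

lemma fam_sub:
  assumes X1: "X1 \<in> EFfam E s t \<pi> \<mu> NN FF BB Z"
  shows "X1 \<subseteq> M0"
proof (rule ccontr)
  assume nsub: "\<not> X1 \<subseteq> M0"
  have X1Z: "X1 \<subseteq> Z \<inter> immu E \<pi> \<mu>" and Wth: "(Z - X1) \<union> mst ` X1 \<in> Theta E s t NN FF BB"
    using X1 unfolding EFfam_def by auto
  define W where "W = (Z - X1) \<union> mst ` X1"
  define Y where "Y = X1 - M0"
  have Yne: "Y \<noteq> {}" using nsub unfolding Y_def by blast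
  have TW: "TP s t E NN FF BB W" using Theta_TP Wth unfolding W_def by blast
  have WE: "W \<subseteq> E" and Wfct: "funct s W" and Wacy: "acyclic (dedges s t W)"
    using TP_p1[OF TW] TP_p4[OF TW] TP_p5[OF TW] by auto
  have Ysub: "Y \<subseteq> \<zeta> - S" using X1Z Z_eq unfolding Y_def by blast
  have Yimmu: "Y \<subseteq> immu E \<pi> \<mu>" using X1Z unfolding Y_def by blast
  have Yf: "mst g \<in> En" "g \<in> \<mu> (mst g)" "s (mst g) = s g" "g \<in> Ep" "mst g \<notin> \<zeta>" "g \<in> \<zeta>"
    "mst g \<in> W" if g: "g \<in> Y" for g
  proof -
    have gi: "g \<in> immu E \<pi> \<mu>" using g Yimmu by blast
    show h1: "mst g \<in> En" "g \<in> \<mu> (mst g)" using mst_prop[OF gi] by auto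
    show hs: "s (mst g) = s g" using mst_src[OF gi] .
    show gp: "g \<in> Ep" using immu_pos[OF gi] .
    show gz: "g \<in> \<zeta>" using g Ysub by blast
    show "mst g \<notin> \<zeta>"
    proof
      assume "mst g \<in> \<zeta>"
      then have "mst g = g" using zfct gz hs unfolding funct_def by blast
      then show False using h1(1) gp pn_disj by simp
    qed
    show "mst g \<in> W" using g unfolding W_def Y_def by blast
  qed
  have X1_split: "X1 \<subseteq> Y \<union> M0" unfolding Y_def by blast
  define W' where "W' = (\<zeta> - Y) \<union> mst ` Y"
  have W'E: "W' \<subseteq> E" unfolding W'_def using zE Yf(1) En_E by blast
  have W'src: "(\<exists>w\<in>W'. s w = v) \<longleftrightarrow> (\<exists>y\<in>\<zeta>. s y = v)" for v
  proof
    assume "\<exists>w\<in>W'. s w = v"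
    then obtain w where w: "w \<in> W'" "s w = v" by blast
    then have "w \<in> \<zeta> - Y \<or> w \<in> mst ` Y" unfolding W'_def by blast
    then show "\<exists>y\<in>\<zeta>. s y = v"
    proof
      assume "w \<in> \<zeta> - Y" then show ?thesis using w by blast
    next
      assume "w \<in> mst ` Y"
      then obtain g where g: "g \<in> Y" "w = mst g" by blast
      then have "s g = v" "g \<in> \<zeta>" using Yf(3,6)[OF g(1)] w(2) by auto
      then show ?thesis by blast
    qed
  next
    assume "\<exists>y\<in>\<zeta>. s y = v"
    then obtain y where y: "y \<in> \<zeta>" "s y = v" by blast
    show "\<exists>w\<in>W'. s w = v"
    proof (cases "y \<in> Y")
      case True
      then have "mst y \<in> W'" "s (mst y) = v" using Yf(3) y(2) unfolding W'_def by auto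
      then show ?thesis by blast
    next
      case False then have "y \<in> W'" using y unfolding W'_def by blast
      then show ?thesis using y(2) by blast
    qed
  qed
  have W'fct: "funct s W'"
    unfolding funct_def
  proof (intro ballI impI)
    fix w1 w2 assume w: "w1 \<in> W'" "w2 \<in> W'" "s w1 = s w2"
    have c: "w \<in> \<zeta> - Y \<or> (\<exists>g\<in>Y. w = mst g)" if "w \<in> W'" for w
      using that unfolding W'_def by blast
    show "w1 = w2"
    proof (cases "w1 \<in> \<zeta> - Y")
      case True
      show ?thesis
      proof (cases "w2 \<in> \<zeta> - Y")
        case True
        then show ?thesis using \<open>w1 \<in> \<zeta> - Y\<close> zfct w(3) unfolding funct_def by blast
      next
        case False
        then obtain g where g: "g \<in> Y" "w2 = mst g" using c w(2) by blast
        then have "s g = s w1" using Yf(3)[OF g(1)] w(3) by simp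
        then have "g = w1" using zfct Yf(6)[OF g(1)] True unfolding funct_def by blast
        then show ?thesis using True g by blast
      qed
    next
      case False
      then obtain g1 where g1: "g1 \<in> Y" "w1 = mst g1" using c w(1) by blast
      show ?thesis
      proof (cases "w2 \<in> \<zeta> - Y")
        case True
        have "s g1 = s w2" using Yf(3)[OF g1(1)] g1(2) w(3) by simp
        then have "g1 = w2" using zfct Yf(6)[OF g1(1)] True unfolding funct_def by blast
        then show ?thesis using True g1 by blast
      next
        case False
        then obtain g2 where g2: "g2 \<in> Y" "w2 = mst g2" using c w(2) by blast
        have "s g1 = s g2" using Yf(3)[OF g1(1)] Yf(3)[OF g2(1)] g1(2) g2(2) w(3) by simp
        then have "g1 = g2" using zfct Yf(6)[OF g1(1)] Yf(6)[OF g2(1)] unfolding funct_def by blast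
        then show ?thesis using g1 g2 by simp
      qed
    qed
  qed
  have W'acy: "acyclic (dedges s t W')"
  proof (rule acyclicI, rule allI, rule notI)
    fix x assume "(x, x) \<in> (dedges s t W')\<^sup>+"
    then obtain es where es: "dcycle s t es" "set es \<subseteq> W'" using cycle_build[OF W'fct] by blast
    have esE: "set es \<subseteq> E" using es(2) W'E by blast
    show False
    proof (cases "set es \<inter> mst ` Y = {}")
      case True
      then have "set es \<subseteq> \<zeta>" using es(2) unfolding W'_def by blast
      then have "(s (hd es), s (hd es)) \<in> (dedges s t \<zeta>)\<^sup>+" using dcycle_trancl[OF es(1)] by blast
      then show False using zacy unfolding acyclic_def by blast
    next
      case False
      then obtain h where h: "h \<in> set es" "h \<in> mst ` Y" by blast
      then obtain g where g: "g \<in> Y" "h = mst g" by blast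
      have hn: "h \<in> En" using Yf(1)[OF g(1)] g(2) by simp
      have "set es \<subseteq> W"
      proof
        fix f' assume f': "f' \<in> set es"
        show "f' \<in> W"
        proof (cases "f' = h")
          case True then show ?thesis using Yf(7)[OF g(1)] g(2) by simp
        next
          case False
          have fn: "f' \<notin> En"
          proof
            assume "f' \<in> En"
            then have "{h, f'} \<subseteq> set es \<inter> En" using h(1) hn f' by blast
            moreover have "card {h, f'} = 2" using False by simp
            moreover have "finite (set es \<inter> En)" by simp
            ultimately have "card (set es \<inter> En) \<ge> 2" by (metis card_mono)
            then show False using one_neg[OF es(1) esE] by simp
          qed
          have "f' \<notin> mst ` Y" using fn Yf(1) by blast
          then have fz: "f' \<in> \<zeta>" "f' \<notin> Y" using f' es(2) unfolding W'_def by auto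
          have "f' \<notin> S" using fn S_sub by blast
          then have "f' \<in> Z" using fz Z_eq by blast
          moreover have "f' \<notin> X1" using fz X1_split M0_disj by blast
          ultimately show ?thesis unfolding W_def by blast
        qed
      qed
      then have "(s (hd es), s (hd es)) \<in> (dedges s t W)\<^sup>+" using dcycle_trancl[OF es(1)] by blast
      then show False using Wacy unfolding acyclic_def by blast
    qed
  qed
  have W'TP0: "TP0 s t E NN BB W'"
    unfolding TP0_def using W'E W'fct W'acy znoB zout W'src by blast
  have W'Fc: "\<forall>r\<in>BB. \<exists>f\<in>FF. (f, r) \<in> (dedges s t W')\<^sup>*"
  proof
    fix r assume rB: "r \<in> BB"
    show "\<exists>f\<in>FF. (f, r) \<in> (dedges s t W')\<^sup>*"
    proof (cases "r = m + 1")
      case True then show ?thesis by blast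
    next
      case rm: False
      show ?thesis
      proof (cases "m + 1 \<notin> BB \<and> r \<in> Nblk ms d 0")
        case True
        then show ?thesis using L3[OF W'TP0] rB by blast
      next
        case c: False
        obtain i where i: "i \<in> {1..d}" "(ji i, r) \<in> (dedges s t \<zeta>)\<^sup>*" using L4'[OF zeta_TP rB rm c] by blast
        define D where "D = s ` S \<union> s ` Y"
        let ?R = "{p \<in> dedges s t \<zeta>. fst p \<notin> D}"
        have RZ: "?R \<subseteq> dedges s t \<zeta>" by blast
        have "(ji i, r) \<in> ?R\<^sup>* \<or> (\<exists>v\<in>D. (ji i, v) \<in> ?R\<^sup>* \<and> (v, r) \<in> (dedges s t \<zeta>)\<^sup>*)"
          using avoid_first[OF i(2)] .
        then show ?thesis
        proof
          assume a: "(ji i, r) \<in> ?R\<^sup>*"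
          have "?R \<subseteq> dedges s t W'"
          proof
            fix p assume "p \<in> ?R"
            then obtain y where y: "y \<in> \<zeta>" "p = (s y, t y)" "s y \<notin> D" unfolding dedges_def by auto
            then have "y \<notin> Y" unfolding D_def by blast
            then have "y \<in> W'" using y(1) unfolding W'_def by blast
            then show "p \<in> dedges s t W'" using y(2) unfolding dedges_def by blast
          qed
          then have "(ji i, r) \<in> (dedges s t W')\<^sup>*" using a rtrancl_mono by blast
          then show ?thesis using i(1) by blast
        next
          assume "\<exists>v\<in>D. (ji i, v) \<in> ?R\<^sup>* \<and> (v, r) \<in> (dedges s t \<zeta>)\<^sup>*"
          then obtain v where v: "v \<in> D" "(ji i, v) \<in> ?R\<^sup>*" "(v, r) \<in> (dedges s t \<zeta>)\<^sup>*" by blast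
          have vz: "(ji i, v) \<in> (dedges s t \<zeta>)\<^sup>*" using v(2) RZ rtrancl_mono by blast
          show ?thesis
          proof (cases "v \<in> s ` S")
            case True
            then obtain e where e: "e \<in> S" "s e = v" by blast
            then show ?thesis using no_S_on_path[OF rB rm c i(1) vz v(3) e(1) e(2)] by blast
          next
            case False
            then obtain g where g: "g \<in> Y" "s g = v" using v(1) unfolding D_def by blast
            have "?R \<subseteq> dedges s t W"
            proof
              fix p assume "p \<in> ?R"
              then obtain y where y: "y \<in> \<zeta>" "p = (s y, t y)" "s y \<notin> D" unfolding dedges_def by auto
              then have "y \<notin> Y" "y \<notin> S" unfolding D_def by auto
              then have "y \<in> Z" using y(1) Z_eq by blast
              moreover have "y \<notin> X1" using \<open>y \<notin> Y\<close> y(1) X1_split M0_disj by blast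
              ultimately have "y \<in> W" unfolding W_def by blast
              then show "p \<in> dedges s t W" using y(2) unfolding dedges_def by blast
            qed
            then have pW: "(ji i, v) \<in> (dedges s t W)\<^sup>*" using v(2) rtrancl_mono by blast
            have hW: "mst g \<in> W" "s (mst g) = v" "\<pi> (mst g) < 0"
              using Yf(7)[OF g(1)] Yf(3)[OF g(1)] g(2) Yf(1)[OF g(1)] unfolding Eneg_def by auto
            have "(ji i, m + 1) \<in> (dedges s t W)\<^sup>*" using L5[OF Wfct Wacy WE i(1) pW hW] by blast
            then have "ji i = m + 1" using count[OF TW cardFB finF, of "ji i" "m + 1" "m + 1"] i(1) by blast
            moreover have "ji i \<in> Nblk ms d i" using ji_in i(1) by blast
            ultimately show ?thesis using m1_notblk[OF i(1)] by simp
          qed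
        qed
      qed
    qed
  qed
  have "TP s t E NN FF BB W'" using W'TP0 W'Fc unfolding TP0_def TP_def by blast
  then have "W' \<in> Theta E s t NN FF BB" using TP_Theta by blast
  moreover have "Y \<subseteq> \<zeta> \<inter> immu E \<pi> \<mu>" using Ysub Yimmu by blast
  ultimately have "Y \<in> EFfam E s t \<pi> \<mu> NN FF BB \<zeta>" unfolding EFfam_def W'_def by blast
  then show False using zeta_fam Yne by blast
qed

lemma Z_psi: "psiF E s t \<pi> \<mu> NN FF BB Z = \<zeta>"
proof -
  have "EFmax E s t \<pi> \<mu> NN FF BB Z = M0"
    unfolding EFmax_def using M0_fam fam_sub by blast
  moreover have "(Z - M0) \<union> mst ` M0 = \<zeta>"
  proof -
    have "Z - M0 = \<zeta> - S" using Z_eq M0_disj by blast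
    then show ?thesis using M0_mst S_sub by blast
  qed
  ultimately show ?thesis unfolding psiF_def by simp
qed

end

context setting begin

theorem main:
  "{Z \<in> Theta E s t NN FF BB. psiF E s t \<pi> \<mu> NN FF BB Z = \<zeta>}
         = {X \<union> (\<zeta> \<inter> Ep) | X. X \<in> odot (\<zeta> \<inter> En) (\<lambda>e. insert e (\<mu> e))}"
proof
  show "{Z \<in> Theta E s t NN FF BB. psiF E s t \<pi> \<mu> NN FF BB Z = \<zeta>}
         \<subseteq> {X \<union> (\<zeta> \<inter> Ep) | X. X \<in> odot (\<zeta> \<inter> En) (\<lambda>e. insert e (\<mu> e))}"
    using partA by blast
  show "{X \<union> (\<zeta> \<inter> Ep) | X. X \<in> odot (\<zeta> \<inter> En) (\<lambda>e. insert e (\<mu> e))}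
         \<subseteq> {Z \<in> Theta E s t NN FF BB. psiF E s t \<pi> \<mu> NN FF BB Z = \<zeta>}"
  proof
    fix Z0 assume "Z0 \<in> {X \<union> (\<zeta> \<inter> Ep) | X. X \<in> odot (\<zeta> \<inter> En) (\<lambda>e. insert e (\<mu> e))}"
    then obtain fc where fc: "Z0 = fc ` (\<zeta> \<inter> En) \<union> (\<zeta> \<inter> Ep)" "\<forall>e\<in>\<zeta> \<inter> En. fc e \<in> insert e (\<mu> e)"
      unfolding odot_def by blast
    interpret sb: setB d ms ji E s t \<pi> \<mu> k ell Bt \<zeta> fc
      using fc(2) by unfold_locales
    have "Z0 = sb.Z" using fc(1) unfolding sb.Z_def by simp
    then show "Z0 \<in> {Z \<in> Theta E s t NN FF BB. psiF E s t \<pi> \<mu> NN FF BB Z = \<zeta>}"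
      using sb.Z_Theta sb.Z_psi by simp
  qed
qed

end


theorem lemma5p4:
  fixes d :: nat and ms :: "nat \<Rightarrow> nat"
    and A :: "nat \<Rightarrow> nat \<Rightarrow> 'r::ordered_comm_ring" and b :: "nat \<Rightarrow> 'r"
    and ji :: "nat \<Rightarrow> nat"
    and E :: "'e set" and s t :: "'e \<Rightarrow> nat" and \<pi> :: "'e \<Rightarrow> 'r" and \<mu> :: "'e \<Rightarrow> 'e set"
    and k ell :: nat and Bt :: "nat set" and \<zeta> :: "'e set"
  defines "m \<equiv> mtot ms d"
  defines "N \<equiv> {1..m + 1}"
  defines "F \<equiv> ji ` {1..d} \<union> {m + 1}"
  defines "B \<equiv> insert ell Bt"
  (* standing assumptions on (A | b) *)
  assumes A_block: "\<forall>i\<in>{1..d}. \<forall>r\<in>Nblk ms d i. \<forall>c\<in>{1..m} - Nblk ms d i. A r c = 0"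
    and b_block: "\<forall>i\<in>{1..d}. card {r \<in> Nblk ms d i. b r \<noteq> 0} \<le> 1"
    and ji_in: "\<forall>i\<in>{1..d}. ji i \<in> Nblk ms d i"
    and b_zero: "\<forall>j\<in>{1..m - ms 0}. j \<notin> ji ` {1..d} \<longrightarrow> b j = 0"
  (* the multidigraph *)
    and fin: "finite E"
    and ends: "\<forall>e\<in>E. s e \<in> N \<and> t e \<in> N"
    and noloop: "\<forall>e\<in>E. s e \<noteq> t e"
  (* A-compatibility *)
    and compat1: "\<forall>e\<in>E. \<forall>i\<in>{0..d}. \<forall>j\<in>{1..d}. i \<noteq> j \<longrightarrow>
                    \<not> (s e \<in> Nblk ms d i \<and> t e \<in> Nblk ms d j)"
    and compat2: "\<forall>l\<in>N - F. \<forall>j\<in>N. lap E s t \<pi> N l j = (if j \<le> m then A l j else b l)"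
  (* P-graph *)
    and P: "Pgraph E s t \<pi> \<mu>"
  (* condition ( * ) *)
    and star: "\<forall>l'\<in>{1..m}. \<forall>i\<in>{1..d}. \<forall>es.
                 set es \<subseteq> E \<and> dpath s t es (ji i) l' \<and> (\<exists>e\<in>set es. \<pi> e < 0)
                 \<longrightarrow> m + 1 \<in> pathnodes s t es"
    and k: "k \<in> {1..d + 1}"
    and Bt: "Bt \<in> odot ({1..d + 1} - {k}) (Nblk ms d)"
    and l: "ell \<in> N - Bt"
    and zeta: "\<zeta> \<in> Lambda E s t \<pi> \<mu> N F B"
  shows "{Z \<in> Theta E s t N F B. psiF E s t \<pi> \<mu> N F B Z = \<zeta>}
         = {X \<union> (\<zeta> \<inter> Epos E \<pi>) | X. X \<in> odot (\<zeta> \<inter> Eneg E \<pi>) (\<lambda>e. insert e (\<mu> e))}"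
proof -
  have h: "setting d ms ji E s t \<pi> \<mu> k ell Bt \<zeta>"
    unfolding setting_def using ji_in fin ends noloop compat1 P star k Bt l zeta
    unfolding m_def N_def F_def B_def by simp
  interpret setting d ms ji E s t \<pi> \<mu> k ell Bt \<zeta> by (rule h)
  show ?thesis unfolding m_def N_def F_def B_def by (rule main)
qed

end
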